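(* Let $\phi^n,\phi^{n-1}\in\mathcal{C}_{\rm per}$ satisfy $0<\phi^n_{i,j},\phi^{n-1}_{i,j}<1/\rho$ for all $i,j$, and $\overline{\phi^n}=\overline{\phi^{n-1}}$. Let $\Delta t>0$ and $A>0$. Then there exists a unique $\phi^{n+1}\in\mathcal{C}_{\rm per}$ (together with $\mu^{n+1}\in\mathcal{C}_{\rm per}$) solving $$\frac{3\phi^{n+1}-4\phi^n+\phi^{n-1}}{2\Delta t}=\Delta_h\mu^{n+1},$$ $$\mu^{n+1}=S'(\phi^{n+1})+\kappa'(\phi^{n+1})\big(a_x((D_x\phi^{n+1})^2)+a_y((D_y\phi^{n+1})^2)\big)-2d_x\big(A_x\kappa(\phi^{n+1})D_x\phi^{n+1}\big)-2d_y\big(A_y\kappa(\phi^{n+1})D_y\phi^{n+1}\big)+H'(2\phi^n-\phi^{n-1})-A\Delta t\,\Delta_h(\phi^{n+1}-\phi^n),$$ and it satisfies $\overline{\phi^{n+1}}=\overline{\phi^n}$ and $0<\phi^{n+1}_{i,j}<1/\rho$ for all $i,j$.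
   Context: Parameters: $N_1,N_2,\chi>0$, $\tau=\sqrt{\pi N_2}N_1$, $\rho=1+N_2/\tau$. $S'(\phi)=(\frac1\tau+\frac1{N_1})\ln\phi-\rho\ln(1-\rho\phi)$, $H'(\phi)=-2\chi\rho\phi$, $\kappa(\phi)=\frac{1}{36\phi(1-\phi)}$, $\kappa'(\phi)=\frac{2\phi-1}{36\phi^2(1-\phi)^2}$, all applied pointwise. Grid: $\Omega=(0,L)^2$, $h=L/N$; $\mathcal{C}_{\rm per}$ = $N$-periodic grid functions $\nu_{i,j}$ at cell centers. Edge operators: $D_x\nu_{i+1/2,j}=(\nu_{i+1,j}-\nu_{i,j})/h$, $A_x\nu_{i+1/2,j}=(\nu_{i+1,j}+\nu_{i,j})/2$; for edge functions $f$: $a_xf_{i,j}=(f_{i+1/2,j}+f_{i-1/2,j})/2$, $d_xf_{i,j}=(f_{i+1/2,j}-f_{i-1/2,j})/h$; analogously in $y$. $\Delta_h\nu=d_x(D_x\nu)+d_y(D_y\nu)$ (five-point Laplacian). $\overline{\nu}=\frac{h^2}{|\Omega|}\sum_{i,j=1}^N\nu_{i,j}$. *)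

theory Defs
  imports Complex_Main
begin

text \<open>Grid functions are functions on integer index pairs (i,j); cell centres are
  indexed by (i,j), and an x-edge function value f i j stands for the value at the
  edge (i+1/2, j) (analogously for y-edges at (i, j+1/2)).\<close>

type_synonym gridfun = "int \<Rightarrow> int \<Rightarrow> real"

definition periodic :: "nat \<Rightarrow> gridfun \<Rightarrow> bool" where
  "periodic N \<nu> \<longleftrightarrow> (\<forall>i j. \<nu> (i + int N) j = \<nu> i j \<and> \<nu> i (j + int N) = \<nu> i j)"

definition Dx :: "real \<Rightarrow> gridfun \<Rightarrow> gridfun" where
  "Dx h \<nu> i j = (\<nu> (i+1) j - \<nu> i j) / h"
definition Dy :: "real \<Rightarrow> gridfun \<Rightarrow> gridfun" where
  "Dy h \<nu> i j = (\<nu> i (j+1) - \<nu> i j) / h"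
definition Ax :: "gridfun \<Rightarrow> gridfun" where
  "Ax \<nu> i j = (\<nu> (i+1) j + \<nu> i j) / 2"
definition Ay :: "gridfun \<Rightarrow> gridfun" where
  "Ay \<nu> i j = (\<nu> i (j+1) + \<nu> i j) / 2"
definition ax :: "gridfun \<Rightarrow> gridfun" where
  "ax f i j = (f i j + f (i-1) j) / 2"
definition ay :: "gridfun \<Rightarrow> gridfun" where
  "ay f i j = (f i j + f i (j-1)) / 2"
definition dx :: "real \<Rightarrow> gridfun \<Rightarrow> gridfun" where
  "dx h f i j = (f i j - f (i-1) j) / h"
definition dy :: "real \<Rightarrow> gridfun \<Rightarrow> gridfun" where
  "dy h f i j = (f i j - f i (j-1)) / h"

definition lap :: "real \<Rightarrow> gridfun \<Rightarrow> gridfun" where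
  "lap h \<nu> i j = dx h (Dx h \<nu>) i j + dy h (Dy h \<nu>) i j"

text \<open>Discrete mean over one period, \<Omega> = (0,L)^2, h = L/N.\<close>
definition gmean :: "nat \<Rightarrow> real \<Rightarrow> gridfun \<Rightarrow> real" where
  "gmean N L \<nu> = ((L / real N)^2 / L^2) * (\<Sum>i\<in>{1..int N}. \<Sum>j\<in>{1..int N}. \<nu> i j)"

definition tau :: "real \<Rightarrow> real \<Rightarrow> real" where
  "tau N1 N2 = sqrt (pi * N2) * N1"
definition rho :: "real \<Rightarrow> real \<Rightarrow> real" where
  "rho N1 N2 = 1 + N2 / tau N1 N2"

definition Sp :: "real \<Rightarrow> real \<Rightarrow> real \<Rightarrow> real" where
  "Sp N1 N2 \<phi> = (1 / tau N1 N2 + 1 / N1) * ln \<phi> - rho N1 N2 * ln (1 - rho N1 N2 * \<phi>)"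
definition Hp :: "real \<Rightarrow> real \<Rightarrow> real \<Rightarrow> real \<Rightarrow> real" where
  "Hp N1 N2 \<chi> \<phi> = - 2 * \<chi> * rho N1 N2 * \<phi>"
definition kappa :: "real \<Rightarrow> real" where
  "kappa \<phi> = 1 / (36 * \<phi> * (1 - \<phi>))"
definition kappap :: "real \<Rightarrow> real" where
  "kappap \<phi> = (2 * \<phi> - 1) / (36 * \<phi>^2 * (1 - \<phi>)^2)"

text \<open>The scheme: (\<phi>, \<mu>) solves the BDF2 step given \<phi>^n = p, \<phi>^{n-1} = q.\<close>
definition scheme :: "real \<Rightarrow> real \<Rightarrow> real \<Rightarrow> real \<Rightarrow> real \<Rightarrow> real \<Rightarrow>
    gridfun \<Rightarrow> gridfun \<Rightarrow> gridfun \<Rightarrow> gridfun \<Rightarrow> bool" where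
  "scheme N1 N2 \<chi> h dt A p q \<phi> \<mu> \<longleftrightarrow>
     (\<forall>i j. (3 * \<phi> i j - 4 * p i j + q i j) / (2 * dt) = lap h \<mu> i j) \<and>
     (\<forall>i j. \<mu> i j =
        Sp N1 N2 (\<phi> i j)
        + kappap (\<phi> i j) * (ax (\<lambda>a b. (Dx h \<phi> a b)^2) i j + ay (\<lambda>a b. (Dy h \<phi> a b)^2) i j)
        - 2 * dx h (\<lambda>a b. Ax (\<lambda>c d. kappa (\<phi> c d)) a b * Dx h \<phi> a b) i j
        - 2 * dy h (\<lambda>a b. Ay (\<lambda>c d. kappa (\<phi> c d)) a b * Dy h \<phi> a b) i j
        + Hp N1 N2 \<chi> (2 * p i j - q i j)
        - A * dt * lap h (\<lambda>a b. \<phi> a b - p a b) i j)"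

end

theory Submission
  imports Defs "HOL-Analysis.Function_Topology"
begin


definition red :: "nat \<Rightarrow> int \<Rightarrow> int" where "red N x = (x - 1) mod int N + 1"
definition tsum :: "nat \<Rightarrow> gridfun \<Rightarrow> real" where
  "tsum N f = (\<Sum>i\<in>{1..int N}. \<Sum>j\<in>{1..int N}. f i j)"

lemma red_range: "N > 0 \<Longrightarrow> red N x \<in> {1..int N}"
proof -
  assume "N > 0" then have "int N > 0" by simp
  then have "0 \<le> (x - 1) mod int N" "(x - 1) mod int N < int N" by simp_all
  then show ?thesis unfolding red_def by auto
qed

lemma red_id: "x \<in> {1..int N} \<Longrightarrow> red N x = x"
  unfolding red_def by (auto simp: mod_pos_pos_trivial)

lemma per_shift_nat:
  assumes "periodic N \<phi>"
  shows "\<phi> (i + int n * int N) j = \<phi> i j \<and> \<phi> i (j + int n * int N) = \<phi> i j"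
proof (induction n arbitrary: i j)
  case 0 then show ?case by simp
next
  case (Suc n)
  have "\<phi> (i + int (Suc n) * int N) j = \<phi> ((i + int n * int N) + int N) j" by (simp add: algebra_simps)
  also have "\<dots> = \<phi> i j" using assms Suc unfolding periodic_def by simp
  moreover have "\<phi> i (j + int (Suc n) * int N) = \<phi> i ((j + int n * int N) + int N)" by (simp add: algebra_simps)
  moreover have "\<dots> = \<phi> i j" using assms Suc unfolding periodic_def by simp
  ultimately show ?case by simp
qed

lemma per_shift:
  assumes "periodic N \<phi>"
  shows "\<phi> (i + k * int N) j = \<phi> i j \<and> \<phi> i (j + k * int N) = \<phi> i j"
proof (cases "k \<ge> 0")
  case True
  define n where "n = nat k"
  have "k = int n" using True unfolding n_def by simp
  then show ?thesis using per_shift_nat[OF assms] by simp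
next
  case False
  define n where "n = nat (- k)"
  have k: "k = - int n" using False unfolding n_def by simp
  have "\<phi> (i + k * int N) j = \<phi> ((i + k * int N) + int n * int N) j"
    using per_shift_nat[OF assms] by simp
  moreover have "\<phi> i (j + k * int N) = \<phi> i ((j + k * int N) + int n * int N)"
    using per_shift_nat[OF assms] by simp
  ultimately show ?thesis using k by simp
qed

lemma per_red:
  assumes "periodic N \<phi>"
  shows "\<phi> (red N x) (red N y) = \<phi> x y"
proof -
  have x: "x = red N x + ((x - 1) div int N) * int N" unfolding red_def
    using mod_div_mult_eq[of "x - 1" "int N"] by linarith
  have y: "y = red N y + ((y - 1) div int N) * int N" unfolding red_def
    using mod_div_mult_eq[of "y - 1" "int N"] by linarith
  have "\<phi> x y = \<phi> (red N x) y" by (subst x) (simp add: per_shift[OF assms])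
  also have "\<dots> = \<phi> (red N x) (red N y)" by (subst y) (simp add: per_shift[OF assms])
  finally show ?thesis by simp
qed

lemma sum_shift1:
  fixes f :: "int \<Rightarrow> real"
  assumes "f (1 + int N) = f 1"
  shows "(\<Sum>i\<in>{1..int N}. f (i+1)) = (\<Sum>i\<in>{1..int N}. f i)"
proof (cases "N = 0")
  case True then show ?thesis by simp
next
  case False
  have "(\<Sum>i\<in>{1..int N}. f (i+1)) = (\<Sum>i\<in>{2..int N + 1}. f i)"
    by (rule sum.reindex_bij_witness[where i="\<lambda>i. i - 1" and j="\<lambda>i. i + 1"]) auto
  also have "\<dots> = f (int N + 1) + (\<Sum>i\<in>{2..int N}. f i)"
  proof -
    have "{2..int N + 1} = insert (int N + 1) {2..int N}" using False by auto
    then show ?thesis by simp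
  qed
  also have "\<dots> = (\<Sum>i\<in>{1..int N}. f i)"
  proof -
    have "{1..int N} = insert 1 {2..int N}" using False by auto
    then show ?thesis using assms by (simp add: add.commute)
  qed
  finally show ?thesis .
qed

lemma sum_shiftm1:
  fixes f :: "int \<Rightarrow> real"
  assumes "\<forall>i. f (i + int N) = f i"
  shows "(\<Sum>i\<in>{1..int N}. f (i - 1)) = (\<Sum>i\<in>{1..int N}. f i)"
proof -
  have "(\<Sum>i\<in>{1..int N}. f i) = (\<Sum>i\<in>{1..int N}. f (i - 1 + 1))" by simp
  also have "\<dots> = (\<Sum>i\<in>{1..int N}. f (i - 1))"
  proof -
    have "f (int N) = f 0" using assms[rule_format, of 0] by simp
    then show ?thesis using sum_shift1[of "\<lambda>i. f (i - 1)" N] by (simp add: add.commute)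
  qed
  finally show ?thesis by simp
qed

lemma per_eq:
  assumes "periodic N f" "i' = i + k * int N" "j' = j + l * int N"
  shows "f i' j' = f i j"
  using per_shift[OF assms(1), of i k "j + l * int N"] per_shift[OF assms(1), of i l j] assms(2,3) by simp

lemma perD1: "periodic N f \<Longrightarrow> f (i + int N) j = f i j" unfolding periodic_def by simp
lemma perD2: "periodic N f \<Longrightarrow> f i (j + int N) = f i j" unfolding periodic_def by simp

lemma tsum_add: "tsum N (\<lambda>i j. f i j + g i j) = tsum N f + tsum N g"
  unfolding tsum_def by (simp add: sum.distrib)
lemma tsum_diff: "tsum N (\<lambda>i j. f i j - g i j) = tsum N f - tsum N g"
  unfolding tsum_def by (simp add: sum_subtractf)
lemma tsum_cmult: "tsum N (\<lambda>i j. c * f i j) = c * tsum N f"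
  unfolding tsum_def by (simp add: sum_distrib_left)
lemma tsum_multc: "tsum N (\<lambda>i j. f i j * c) = tsum N f * c"
  unfolding tsum_def by (simp add: sum_distrib_right)
lemma tsum_divide: "tsum N (\<lambda>i j. f i j / c) = tsum N f / c"
  unfolding tsum_def by (simp add: sum_divide_distrib)
lemma tsum_neg: "tsum N (\<lambda>i j. - f i j) = - tsum N f"
  unfolding tsum_def by (simp add: sum_negf)
lemma tsum_cong: "(\<And>i j. i \<in> {1..int N} \<Longrightarrow> j \<in> {1..int N} \<Longrightarrow> f i j = g i j) \<Longrightarrow> tsum N f = tsum N g"
  unfolding tsum_def by (auto intro!: sum.cong)
lemma tsum_nonneg: "(\<And>i j. i \<in> {1..int N} \<Longrightarrow> j \<in> {1..int N} \<Longrightarrow> 0 \<le> f i j) \<Longrightarrow> 0 \<le> tsum N f"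
  unfolding tsum_def by (auto intro!: sum_nonneg)
lemma tsum_mono: "(\<And>i j. i \<in> {1..int N} \<Longrightarrow> j \<in> {1..int N} \<Longrightarrow> f i j \<le> g i j) \<Longrightarrow> tsum N f \<le> tsum N g"
  unfolding tsum_def by (auto intro!: sum_mono)
lemma tsum_zero: "tsum N (\<lambda>i j. 0) = 0" unfolding tsum_def by simp

lemma tsum_shift_ip:
  assumes "periodic N f" shows "tsum N (\<lambda>i j. f (i+1) j) = tsum N f"
proof -
  have "tsum N (\<lambda>i j. f (i+1) j) = (\<Sum>j\<in>{1..int N}. \<Sum>i\<in>{1..int N}. f (i+1) j)"
    unfolding tsum_def by (rule sum.swap)
  also have "\<dots> = (\<Sum>j\<in>{1..int N}. \<Sum>i\<in>{1..int N}. f i j)"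
    by (rule sum.cong[OF refl], rule sum_shift1) (simp add: perD1[OF assms] add.commute)
  also have "\<dots> = tsum N f" unfolding tsum_def by (rule sum.swap)
  finally show ?thesis .
qed

lemma tsum_shift_im:
  assumes "periodic N f" shows "tsum N (\<lambda>i j. f (i - 1) j) = tsum N f"
proof -
  have "tsum N (\<lambda>i j. f (i - 1) j) = (\<Sum>j\<in>{1..int N}. \<Sum>i\<in>{1..int N}. f (i - 1) j)"
    unfolding tsum_def by (rule sum.swap)
  also have "\<dots> = (\<Sum>j\<in>{1..int N}. \<Sum>i\<in>{1..int N}. f i j)"
    by (rule sum.cong[OF refl], rule sum_shiftm1) (simp add: perD1[OF assms])
  also have "\<dots> = tsum N f" unfolding tsum_def by (rule sum.swap)
  finally show ?thesis .
qed

lemma tsum_shift_jp: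
  assumes "periodic N f" shows "tsum N (\<lambda>i j. f i (j+1)) = tsum N f"
  unfolding tsum_def
  by (rule sum.cong[OF refl], rule sum_shift1) (simp add: perD2[OF assms] add.commute)

lemma tsum_shift_jm:
  assumes "periodic N f" shows "tsum N (\<lambda>i j. f i (j - 1)) = tsum N f"
  unfolding tsum_def
  by (rule sum.cong[OF refl], rule sum_shiftm1) (simp add: perD2[OF assms])

lemma periodicI: "(\<And>i j. f (i + int N) j = f i j) \<Longrightarrow> (\<And>i j. f i (j + int N) = f i j) \<Longrightarrow> periodic N f"
  unfolding periodic_def by simp

lemma per_comp1: "periodic N f \<Longrightarrow> periodic N (\<lambda>i j. F (f i j))"
  unfolding periodic_def by simp
lemma per_comp2: "periodic N f \<Longrightarrow> periodic N g \<Longrightarrow> periodic N (\<lambda>i j. F (f i j) (g i j))"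
  unfolding periodic_def by simp
lemma perD1': assumes "periodic N f" shows "f (i + int N + c) j = f (i + c) j"
proof -
  have e: "i + int N + c = (i + c) + int N" by simp
  show ?thesis unfolding e by (rule perD1[OF assms])
qed
lemma perD1'': "periodic N f \<Longrightarrow> f (i + int N - c) j = f (i - c) j"
  using perD1'[of N f i "- c" j] by simp
lemma perD2': assumes "periodic N f" shows "f i (j + int N + c) = f i (j + c)"
proof -
  have e: "j + int N + c = (j + c) + int N" by simp
  show ?thesis unfolding e by (rule perD2[OF assms])
qed
lemma perD2'': "periodic N f \<Longrightarrow> f i (j + int N - c) = f i (j - c)"
  using perD2'[of N f i j "- c"] by simp

lemma per_sh: assumes "periodic N f" shows "periodic N (\<lambda>i j. f (i + a) (j + b))"
proof (rule periodicI)
  fix i j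
  have e: "i + int N + a = (i + a) + int N" by simp
  show "f (i + int N + a) (j + b) = f (i + a) (j + b)" by (simp only: e perD1[OF assms])
  have e2: "j + int N + b = (j + b) + int N" by simp
  show "f (i + a) (j + int N + b) = f (i + a) (j + b)" by (simp only: e2 perD2[OF assms])
qed
lemma per_const: "periodic N (\<lambda>i j. c)" unfolding periodic_def by simp

lemma per_Dx: "periodic N f \<Longrightarrow> periodic N (Dx h f)"
  unfolding Dx_def by (rule periodicI) (simp_all add: perD1' perD1 perD2)
lemma per_Dy: "periodic N f \<Longrightarrow> periodic N (Dy h f)"
  unfolding Dy_def by (rule periodicI) (simp_all add: perD2' perD1 perD2)
lemma per_Ax: "periodic N f \<Longrightarrow> periodic N (Ax f)"
  unfolding Ax_def by (rule periodicI) (simp_all add: perD1' perD1 perD2)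
lemma per_Ay: "periodic N f \<Longrightarrow> periodic N (Ay f)"
  unfolding Ay_def by (rule periodicI) (simp_all add: perD2' perD1 perD2)
lemma per_ax: "periodic N f \<Longrightarrow> periodic N (ax f)"
  unfolding ax_def by (rule periodicI) (simp_all add: perD1'' perD1 perD2)
lemma per_ay: "periodic N f \<Longrightarrow> periodic N (ay f)"
  unfolding ay_def by (rule periodicI) (simp_all add: perD2'' perD1 perD2)
lemma per_dx: "periodic N f \<Longrightarrow> periodic N (dx h f)"
  unfolding dx_def by (rule periodicI) (simp_all add: perD1'' perD1 perD2)
lemma per_dy: "periodic N f \<Longrightarrow> periodic N (dy h f)"
  unfolding dy_def by (rule periodicI) (simp_all add: perD2'' perD1 perD2)
lemma per_lap: assumes "periodic N f" shows "periodic N (lap h f)"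
proof -
  have a: "periodic N (dx h (Dx h f))" by (rule per_dx[OF per_Dx[OF assms]])
  have b: "periodic N (dy h (Dy h f))" by (rule per_dy[OF per_Dy[OF assms]])
  have "periodic N (\<lambda>i j. dx h (Dx h f) i j + dy h (Dy h f) i j)" by (rule per_comp2[OF a b])
  moreover have "lap h f = (\<lambda>i j. dx h (Dx h f) i j + dy h (Dy h f) i j)" by (intro ext) (simp add: lap_def)
  ultimately show ?thesis by simp
qed
lemma per_mult: "periodic N f \<Longrightarrow> periodic N g \<Longrightarrow> periodic N (\<lambda>i j. f i j * g i j)"
  by (rule per_comp2)

lemma sbp_x:
  assumes "periodic N u" "periodic N e"
  shows "tsum N (\<lambda>i j. u i j * dx h e i j) = - tsum N (\<lambda>i j. Dx h u i j * e i j)"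
proof -
  have pw: "periodic N (\<lambda>i j. u (i+1) j * e i j)"
    using per_mult[OF per_sh[OF assms(1), of 1 0] assms(2)] by simp
  have "tsum N (\<lambda>i j. u i j * e (i - 1) j) = tsum N (\<lambda>i j. u (i+1) j * e i j)"
    using tsum_shift_im[OF pw] by simp
  then show ?thesis
    unfolding dx_def Dx_def
    by (simp add: right_diff_distrib left_diff_distrib tsum_diff tsum_divide diff_divide_distrib)
qed

lemma sbp_y:
  assumes "periodic N u" "periodic N e"
  shows "tsum N (\<lambda>i j. u i j * dy h e i j) = - tsum N (\<lambda>i j. Dy h u i j * e i j)"
proof -
  have pw: "periodic N (\<lambda>i j. u i (j+1) * e i j)"
    using per_mult[OF per_sh[OF assms(1), of 0 1] assms(2)] by simp
  have "tsum N (\<lambda>i j. u i j * e i (j - 1)) = tsum N (\<lambda>i j. u i (j+1) * e i j)"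
    using tsum_shift_jm[OF pw] by simp
  then show ?thesis
    unfolding dy_def Dy_def
    by (simp add: right_diff_distrib left_diff_distrib tsum_diff tsum_divide diff_divide_distrib)
qed

lemma sbp_lap:
  assumes "periodic N v" "periodic N u"
  shows "tsum N (\<lambda>i j. v i j * lap h u i j) = - tsum N (\<lambda>i j. Dx h v i j * Dx h u i j + Dy h v i j * Dy h u i j)"
proof -
  have "tsum N (\<lambda>i j. v i j * lap h u i j) = tsum N (\<lambda>i j. v i j * dx h (Dx h u) i j) + tsum N (\<lambda>i j. v i j * dy h (Dy h u) i j)"
    unfolding lap_def by (simp add: distrib_left tsum_add)
  also have "\<dots> = - tsum N (\<lambda>i j. Dx h v i j * Dx h u i j) - tsum N (\<lambda>i j. Dy h v i j * Dy h u i j)"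
    using sbp_x[OF assms(1) per_Dx[OF assms(2)]] sbp_y[OF assms(1) per_Dy[OF assms(2)]] by simp
  finally show ?thesis by (simp add: tsum_add)
qed

lemma tsum_lap:
  assumes "periodic N u"
  shows "tsum N (lap h u) = 0"
  using sbp_lap[OF per_const[of N 1] assms, of h] by (simp add: Dx_def Dy_def tsum_zero)

lemma sbp_lap_sym:
  assumes "periodic N v" "periodic N u"
  shows "tsum N (\<lambda>i j. v i j * lap h u i j) = tsum N (\<lambda>i j. u i j * lap h v i j)"
  using sbp_lap[OF assms] sbp_lap[OF assms(2,1)] by (simp add: mult.commute)


lemma alg1:
  fixes u1 u2 x x' d :: real
  assumes u1p: "u1 > 0" and u2p: "u2 > 0"
  shows "x'^2/u2 - (x^2/u1 - (u2 - u1 + 36 * d^2) * x^2/u1^2 - 2*x*d/u1 + 2*x*(x' - x + d)/u1)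
     = (x' * u1 - x * u2)^2 / (u1^2 * u2) + 36 * x^2 * d^2 / u1^2"
proof -
  have "x'^2/u2 - (x^2/u1 - (u2 - u1 + 36 * d^2) * x^2/u1^2 - 2*x*d/u1 + 2*x*(x' - x + d)/u1)
     = (x'^2 * u1^2 - (x^2*u1*u2 - (u2 - u1 + 36 * d^2) * x^2 * u2 - 2*x*d*u1*u2 + 2*x*(x' - x + d)*u1*u2)) / (u1^2 * u2)"
    using u1p u2p by (simp add: field_simps power2_eq_square)
  also have "\<dots> = ((x' * u1 - x * u2)^2 + 36 * x^2 * d^2 * u2) / (u1^2 * u2)"
    by (rule arg_cong[where f="\<lambda>t. t / (u1^2 * u2)"]) (simp add: power2_eq_square algebra_simps)
  also have "\<dots> = (x' * u1 - x * u2)^2 / (u1^2 * u2) + 36 * x^2 * d^2 / u1^2"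
    using u1p u2p by (simp add: field_simps power2_eq_square)
  finally show ?thesis .
qed

lemma m_fo:
  fixes a1 a2 b1 b2 :: real
  assumes "0 < a1" "a1 < 1" "0 < a2" "a2 < 1"
  shows "kappa a1 * (b1-a1)^2 + (kappap a1*(b1-a1)^2 - 2*kappa a1*(b1-a1))*(a2-a1) + 2*kappa a1*(b1-a1)*(b2-b1)
          \<le> kappa a2 * (b2-a2)^2"
proof -
  define u1 where "u1 = 36 * a1 * (1 - a1)"
  define u2 where "u2 = 36 * a2 * (1 - a2)"
  define x where "x = b1 - a1"
  define x' where "x' = b2 - a2"
  define d where "d = a2 - a1"
  have u1p: "u1 > 0" using assms unfolding u1_def by simp
  have u2p: "u2 > 0" using assms unfolding u2_def by simp
  have k1: "kappa a1 = 1 / u1" unfolding u1_def kappa_def by simp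
  have k2: "kappa a2 = 1 / u2" unfolding u2_def kappa_def by simp
  have kp1: "kappap a1 = - 36 * (1 - 2*a1) / u1^2"
  proof -
    define X where "X = a1^2 * (1 - a1)^2"
    have Xp: "X > 0" unfolding X_def using assms by simp
    have "u1^2 = 36 * (36 * X)" unfolding u1_def X_def by (simp add: power2_eq_square algebra_simps)
    moreover have "- 36 * (1 - 2*a1) / (36 * (36 * X)) = (2*a1 - 1) / (36 * X)" using Xp by (simp add: field_simps)
    ultimately show ?thesis unfolding kappap_def X_def by (simp add: mult.assoc)
  qed
  have uu: "36 * (1 - 2*a1) * d = u2 - u1 + 36 * d^2" unfolding u1_def u2_def d_def
    by (simp add: power2_eq_square algebra_simps)
  have b2: "b2 - b1 = x' - x + d" unfolding x_def x'_def d_def by simp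
  have "kappa a2 * (b2-a2)^2 - (kappa a1 * (b1-a1)^2 + (kappap a1*(b1-a1)^2 - 2*kappa a1*(b1-a1))*(a2-a1) + 2*kappa a1*(b1-a1)*(b2-b1))
      = x'^2/u2 - (x^2/u1 + (- 36 * (1 - 2*a1) / u1^2 * x^2 - 2 * (1/u1) * x) * d + 2 * (1/u1) * x * (x' - x + d))"
    unfolding k1 k2 kp1 b2 x_def[symmetric] x'_def[symmetric] d_def[symmetric] by simp
  also have "\<dots> = x'^2/u2 - (x^2/u1 - (36 * (1 - 2*a1) * d) * x^2/u1^2 - 2*x*d/u1 + 2*x*(x' - x + d)/u1)"
    using u1p by (simp add: field_simps)
  also have "\<dots> = x'^2/u2 - (x^2/u1 - (u2 - u1 + 36 * d^2) * x^2/u1^2 - 2*x*d/u1 + 2*x*(x' - x + d)/u1)"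
    using uu by simp
  also have "\<dots> = (x' * u1 - x * u2)^2 / (u1^2 * u2) + 36 * x^2 * d^2 / u1^2"
    by (rule alg1[OF u1p u2p])
  also have "\<dots> \<ge> 0" using u1p u2p by simp
  finally show ?thesis by simp
qed
definition "ma a b = kappap a*(b-a)^2 - 2*kappa a*(b-a)"
definition "mb a b = 2*kappa a*(b-a)"

lemma m_mono:
  fixes a1 a2 b1 b2 :: real
  assumes "0 < a1" "a1 < 1" "0 < a2" "a2 < 1"
  shows "0 \<le> (ma a1 b1 - ma a2 b2)*(a1-a2) + (mb a1 b1 - mb a2 b2)*(b1-b2)"
  using m_fo[OF assms, of b1 b2] m_fo[OF assms(3,4,1,2), of b2 b1]
  unfolding ma_def mb_def by (simp add: algebra_simps)

definition "edge_val h a b wa wb = ((b-a)/h)^2 * ((kappap b * wb + kappap a * wa)/2) + 2*((kappa b + kappa a)/2)*((b-a)/h)*((wb-wa)/h)"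

lemma edge_mono:
  fixes a1 a2 b1 b2 h :: real
  assumes "0 < a1" "a1 < 1" "0 < a2" "a2 < 1" "0 < b1" "b1 < 1" "0 < b2" "b2 < 1" "h > 0"
  shows "0 \<le> edge_val h a1 b1 (a1-a2) (b1-b2) - edge_val h a2 b2 (a1-a2) (b1-b2)"
proof -
  have e: "h^2 * (edge_val h a1 b1 (a1-a2) (b1-b2) - edge_val h a2 b2 (a1-a2) (b1-b2))
     = ((ma a1 b1 - ma a2 b2)*(a1-a2) + (mb a1 b1 - mb a2 b2)*(b1-b2)
       + ((ma b1 a1 - ma b2 a2)*(b1-b2) + (mb b1 a1 - mb b2 a2)*(a1-a2))) / 2"
    unfolding edge_val_def ma_def mb_def using assms(9)
    by (simp add: power2_eq_square field_simps)
  have "0 \<le> h^2 * (edge_val h a1 b1 (a1-a2) (b1-b2) - edge_val h a2 b2 (a1-a2) (b1-b2))"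
    unfolding e using m_mono[OF assms(1-4), of b1 b2] m_mono[OF assms(5-8), of a1 a2] by simp
  then show ?thesis using assms(9) by (simp add: zero_le_mult_iff)
qed

lemma edge_val_alt:
  fixes P C X Y :: real
  shows "P/2 * X^2 + 2*(Y*(C/2*X)) = X^2*(P/2) + 2*(C/2)*X*Y"
  by (simp add: ac_simps)


lemma tau_pos: "N1 > 0 \<Longrightarrow> N2 > 0 \<Longrightarrow> tau N1 N2 > 0"
  unfolding tau_def by simp
lemma rho_gt1: "N1 > 0 \<Longrightarrow> N2 > 0 \<Longrightarrow> rho N1 N2 > 1"
  unfolding rho_def using tau_pos[of N1 N2] by simp

lemma Sp_strict:
  assumes "N1 > 0" "N2 > 0" "0 < x" "x < y" "y < 1 / rho N1 N2"
  shows "Sp N1 N2 x < Sp N1 N2 y"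
proof -
  have r: "rho N1 N2 > 1" using rho_gt1 assms by simp
  have al: "1 / tau N1 N2 + 1 / N1 > 0" using tau_pos[of N1 N2] assms by (intro add_pos_pos) simp_all
  have "rho N1 N2 * y < 1" using assms r by (simp add: field_simps)
  then have p: "0 < 1 - rho N1 N2 * y" by simp
  have "rho N1 N2 * x < rho N1 N2 * y" using r assms by simp
  then have "ln (1 - rho N1 N2 * y) < ln (1 - rho N1 N2 * x)" using p by simp
  then have a: "- rho N1 N2 * ln (1 - rho N1 N2 * x) < - rho N1 N2 * ln (1 - rho N1 N2 * y)" using r by simp
  have "ln x < ln y" using assms by simp
  then have b: "(1 / tau N1 N2 + 1 / N1) * ln x < (1 / tau N1 N2 + 1 / N1) * ln y" using al by simp
  show ?thesis unfolding Sp_def using a b by simp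
qed

lemma Sp_mono_prod:
  assumes "N1 > 0" "N2 > 0" "0 < x" "x < 1 / rho N1 N2" "0 < y" "y < 1 / rho N1 N2"
  shows "0 \<le> (Sp N1 N2 x - Sp N1 N2 y) * (x - y)" and "x \<noteq> y \<Longrightarrow> 0 < (Sp N1 N2 x - Sp N1 N2 y) * (x - y)"
proof -
  show "x \<noteq> y \<Longrightarrow> 0 < (Sp N1 N2 x - Sp N1 N2 y) * (x - y)"
    using Sp_strict[of N1 N2 x y] Sp_strict[of N1 N2 y x] assms
    by (cases "x < y") (auto simp: mult_neg_neg)
  then show "0 \<le> (Sp N1 N2 x - Sp N1 N2 y) * (x - y)" by (cases "x = y") auto
qed

lemma lap_diff: "lap h (\<lambda>a b. f a b - g a b) i j = lap h f i j - lap h g i j"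
  unfolding lap_def dx_def dy_def Dx_def Dy_def by (simp add: divide_inverse algebra_simps)

lemma sum_ax:
  assumes "periodic N f" "periodic N g"
  shows "tsum N (\<lambda>i j. f i j * ax g i j) = tsum N (\<lambda>i j. Ax f i j * g i j)"
proof -
  have pw: "periodic N (\<lambda>i j. f (i+1) j * g i j)"
    using per_mult[OF per_sh[OF assms(1), of 1 0] assms(2)] by simp
  have "tsum N (\<lambda>i j. f i j * g (i - 1) j) = tsum N (\<lambda>i j. f (i+1) j * g i j)"
    using tsum_shift_im[OF pw] by simp
  then show ?thesis unfolding ax_def Ax_def
    by (simp add: distrib_left distrib_right add_divide_distrib tsum_add tsum_divide)
qed

lemma sum_ay:
  assumes "periodic N f" "periodic N g"
  shows "tsum N (\<lambda>i j. f i j * ay g i j) = tsum N (\<lambda>i j. Ay f i j * g i j)"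
proof -
  have pw: "periodic N (\<lambda>i j. f i (j+1) * g i j)"
    using per_mult[OF per_sh[OF assms(1), of 0 1] assms(2)] by simp
  have "tsum N (\<lambda>i j. f i j * g i (j - 1)) = tsum N (\<lambda>i j. f i (j+1) * g i j)"
    using tsum_shift_jm[OF pw] by simp
  then show ?thesis unfolding ay_def Ay_def
    by (simp add: distrib_left distrib_right add_divide_distrib tsum_add tsum_divide)
qed

definition "tx h \<phi> i j = kappap (\<phi> i j) * ax (\<lambda>a b. (Dx h \<phi> a b)^2) i j
   - 2 * dx h (\<lambda>a b. Ax (\<lambda>c d. kappa (\<phi> c d)) a b * Dx h \<phi> a b) i j"
definition "ty h \<phi> i j = kappap (\<phi> i j) * ay (\<lambda>a b. (Dy h \<phi> a b)^2) i j
   - 2 * dy h (\<lambda>a b. Ay (\<lambda>c d. kappa (\<phi> c d)) a b * Dy h \<phi> a b) i j"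

lemma tx_sum:
  assumes "periodic N \<phi>" "periodic N w"
  shows "tsum N (\<lambda>i j. tx h \<phi> i j * w i j) =
    tsum N (\<lambda>i j. edge_val h (\<phi> i j) (\<phi> (i+1) j) (w i j) (w (i+1) j))"
proof -
  have p1: "periodic N (\<lambda>a b. (Dx h \<phi> a b)^2)" by (rule per_comp1[OF per_Dx[OF assms(1)]])
  have p2: "periodic N (\<lambda>i j. kappap (\<phi> i j) * w i j)" by (rule per_comp2[OF assms])
  have p3: "periodic N (\<lambda>a b. Ax (\<lambda>c d. kappa (\<phi> c d)) a b * Dx h \<phi> a b)"
    by (rule per_mult[OF per_Ax[OF per_comp1[OF assms(1)]] per_Dx[OF assms(1)]])
  have s1: "tsum N (\<lambda>i j. (kappap (\<phi> i j) * w i j) * ax (\<lambda>a b. (Dx h \<phi> a b)^2) i j)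
      = tsum N (\<lambda>i j. Ax (\<lambda>i j. kappap (\<phi> i j) * w i j) i j * (Dx h \<phi> i j)^2)"
    using sum_ax[OF p2 p1] by simp
  have s2: "tsum N (\<lambda>i j. w i j * dx h (\<lambda>a b. Ax (\<lambda>c d. kappa (\<phi> c d)) a b * Dx h \<phi> a b) i j)
     = - tsum N (\<lambda>i j. Dx h w i j * (Ax (\<lambda>c d. kappa (\<phi> c d)) i j * Dx h \<phi> i j))"
    by (rule sbp_x[OF assms(2) p3])
  have "tsum N (\<lambda>i j. tx h \<phi> i j * w i j) =
     tsum N (\<lambda>i j. (kappap (\<phi> i j) * w i j) * ax (\<lambda>a b. (Dx h \<phi> a b)^2) i j)
     - 2 * tsum N (\<lambda>i j. w i j * dx h (\<lambda>a b. Ax (\<lambda>c d. kappa (\<phi> c d)) a b * Dx h \<phi> a b) i j)"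
    unfolding tx_def by (simp add: left_diff_distrib tsum_diff tsum_cmult[symmetric] algebra_simps)
  also have "\<dots> = tsum N (\<lambda>i j. Ax (\<lambda>i j. kappap (\<phi> i j) * w i j) i j * (Dx h \<phi> i j)^2
      + 2 * (Dx h w i j * (Ax (\<lambda>c d. kappa (\<phi> c d)) i j * Dx h \<phi> i j)))"
    unfolding s1 s2 by (simp add: tsum_add tsum_cmult)
  also have "\<dots> = tsum N (\<lambda>i j. edge_val h (\<phi> i j) (\<phi> (i+1) j) (w i j) (w (i+1) j))"
    by (rule tsum_cong) (simp only: edge_val_def Ax_def Dx_def edge_val_alt)
  finally show ?thesis .
qed

lemma ty_sum:
  assumes "periodic N \<phi>" "periodic N w"
  shows "tsum N (\<lambda>i j. ty h \<phi> i j * w i j) =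
    tsum N (\<lambda>i j. edge_val h (\<phi> i j) (\<phi> i (j+1)) (w i j) (w i (j+1)))"
proof -
  have p1: "periodic N (\<lambda>a b. (Dy h \<phi> a b)^2)" by (rule per_comp1[OF per_Dy[OF assms(1)]])
  have p2: "periodic N (\<lambda>i j. kappap (\<phi> i j) * w i j)" by (rule per_comp2[OF assms])
  have p3: "periodic N (\<lambda>a b. Ay (\<lambda>c d. kappa (\<phi> c d)) a b * Dy h \<phi> a b)"
    by (rule per_mult[OF per_Ay[OF per_comp1[OF assms(1)]] per_Dy[OF assms(1)]])
  have s1: "tsum N (\<lambda>i j. (kappap (\<phi> i j) * w i j) * ay (\<lambda>a b. (Dy h \<phi> a b)^2) i j)
      = tsum N (\<lambda>i j. Ay (\<lambda>i j. kappap (\<phi> i j) * w i j) i j * (Dy h \<phi> i j)^2)"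
    using sum_ay[OF p2 p1] by simp
  have s2: "tsum N (\<lambda>i j. w i j * dy h (\<lambda>a b. Ay (\<lambda>c d. kappa (\<phi> c d)) a b * Dy h \<phi> a b) i j)
     = - tsum N (\<lambda>i j. Dy h w i j * (Ay (\<lambda>c d. kappa (\<phi> c d)) i j * Dy h \<phi> i j))"
    by (rule sbp_y[OF assms(2) p3])
  have "tsum N (\<lambda>i j. ty h \<phi> i j * w i j) =
     tsum N (\<lambda>i j. (kappap (\<phi> i j) * w i j) * ay (\<lambda>a b. (Dy h \<phi> a b)^2) i j)
     - 2 * tsum N (\<lambda>i j. w i j * dy h (\<lambda>a b. Ay (\<lambda>c d. kappa (\<phi> c d)) a b * Dy h \<phi> a b) i j)"
    unfolding ty_def by (simp add: left_diff_distrib tsum_diff tsum_cmult[symmetric] algebra_simps)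
  also have "\<dots> = tsum N (\<lambda>i j. Ay (\<lambda>i j. kappap (\<phi> i j) * w i j) i j * (Dy h \<phi> i j)^2
      + 2 * (Dy h w i j * (Ay (\<lambda>c d. kappa (\<phi> c d)) i j * Dy h \<phi> i j)))"
    unfolding s1 s2 by (simp add: tsum_add tsum_cmult)
  also have "\<dots> = tsum N (\<lambda>i j. edge_val h (\<phi> i j) (\<phi> i (j+1)) (w i j) (w i (j+1)))"
    by (rule tsum_cong) (simp only: edge_val_def Ay_def Dy_def edge_val_alt)
  finally show ?thesis .
qed


definition sol where "sol N N1 N2 chi h dt A p q \<phi> \<mu> \<longleftrightarrow> periodic N \<phi> \<and> periodic N \<mu>
   \<and> (\<forall>i j. 0 < \<phi> i j \<and> \<phi> i j < 1 / rho N1 N2) \<and> scheme N1 N2 chi h dt A p q \<phi> \<mu>"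

definition Fmu where "Fmu N1 N2 chi h dt A p q \<phi> i j = Sp N1 N2 (\<phi> i j) + tx h \<phi> i j + ty h \<phi> i j
   + Hp N1 N2 chi (2 * p i j - q i j) - A * dt * lap h (\<lambda>a b. \<phi> a b - p a b) i j"

lemma scheme_iff: "scheme N1 N2 chi h dt A p q \<phi> \<mu> \<longleftrightarrow>
   (\<forall>i j. (3 * \<phi> i j - 4 * p i j + q i j) / (2 * dt) = lap h \<mu> i j) \<and> \<mu> = Fmu N1 N2 chi h dt A p q \<phi>"
  unfolding scheme_def Fmu_def tx_def ty_def fun_eq_iff by (simp add: algebra_simps)

lemma tsum_nonneg_zero:
  assumes "\<And>i j. i \<in> {1..int N} \<Longrightarrow> j \<in> {1..int N} \<Longrightarrow> 0 \<le> f i j" "tsum N f \<le> 0"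
    "i \<in> {1..int N}" "j \<in> {1..int N}"
  shows "f i j = 0"
proof -
  have nn: "\<forall>i\<in>{1..int N}. 0 \<le> (\<Sum>j\<in>{1..int N}. f i j)" using assms(1) by (auto intro!: sum_nonneg)
  have "tsum N f = 0" using assms(2) tsum_nonneg[of N f] assms(1) by force
  then have "\<forall>i\<in>{1..int N}. (\<Sum>j\<in>{1..int N}. f i j) = 0" unfolding tsum_def
    using sum_nonneg_eq_0_iff[of "{1..int N}" "\<lambda>i. \<Sum>j\<in>{1..int N}. f i j"] nn by simp
  then have "(\<Sum>j\<in>{1..int N}. f i j) = 0" using assms(3) by simp
  then show ?thesis using sum_nonneg_eq_0_iff[of "{1..int N}" "\<lambda>j. f i j"] assms(1,3,4) by simp
qed

lemma rho_inv_lt1: "N1 > 0 \<Longrightarrow> N2 > 0 \<Longrightarrow> 1 / rho N1 N2 < 1"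
  using rho_gt1[of N1 N2] by simp

lemma uniqueness:
  assumes pos: "N1 > 0" "N2 > 0" "dt > 0" "A > 0" "h > 0" "N > 0"
    and pq: "periodic N p" "periodic N q"
    and s1: "sol N N1 N2 chi h dt A p q \<phi>1 \<mu>1" and s2: "sol N N1 N2 chi h dt A p q \<phi>2 \<mu>2"
  shows "\<phi>1 = \<phi>2 \<and> \<mu>1 = \<mu>2"
proof -
  have r1: "1 / rho N1 N2 < 1" using rho_inv_lt1 pos by simp
  have P1: "periodic N \<phi>1" "periodic N \<mu>1" and R1: "\<And>i j. 0 < \<phi>1 i j \<and> \<phi>1 i j < 1 / rho N1 N2"
    and E1: "\<And>i j. (3 * \<phi>1 i j - 4 * p i j + q i j) / (2 * dt) = lap h \<mu>1 i j"
    and M1: "\<mu>1 = Fmu N1 N2 chi h dt A p q \<phi>1"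
    using s1 unfolding sol_def scheme_iff by auto
  have P2: "periodic N \<phi>2" "periodic N \<mu>2" and R2: "\<And>i j. 0 < \<phi>2 i j \<and> \<phi>2 i j < 1 / rho N1 N2"
    and E2: "\<And>i j. (3 * \<phi>2 i j - 4 * p i j + q i j) / (2 * dt) = lap h \<mu>2 i j"
    and M2: "\<mu>2 = Fmu N1 N2 chi h dt A p q \<phi>2"
    using s2 unfolding sol_def scheme_iff by auto
  have B1: "0 < \<phi>1 i j" "\<phi>1 i j < 1" "0 < \<phi>2 i j" "\<phi>2 i j < 1" for i j
    using R1[of i j] R2[of i j] r1 by auto
  define w where "w = (\<lambda>i j. \<phi>1 i j - \<phi>2 i j)"
  define v where "v = (\<lambda>i j. \<mu>1 i j - \<mu>2 i j)"
  have pw: "periodic N w" unfolding w_def by (rule per_comp2[OF P1(1) P2(1)])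
  have pv: "periodic N v" unfolding v_def by (rule per_comp2[OF P1(2) P2(2)])
  have wv: "w i j = (2 * dt / 3) * lap h v i j" for i j
  proof -
    have "lap h v i j = (3 * \<phi>1 i j - 4 * p i j + q i j) / (2 * dt) - (3 * \<phi>2 i j - 4 * p i j + q i j) / (2 * dt)"
      unfolding v_def lap_diff E1 E2 by simp
    also have "\<dots> = 3 * w i j / (2 * dt)" unfolding w_def by (simp add: diff_divide_distrib[symmetric] algebra_simps)
    finally show ?thesis using pos(3) by simp
  qed
  have S1: "tsum N (\<lambda>i j. v i j * w i j) \<le> 0"
  proof -
    have "tsum N (\<lambda>i j. v i j * w i j) = (2 * dt / 3) * tsum N (\<lambda>i j. v i j * lap h v i j)"
      unfolding wv by (simp add: tsum_cmult[symmetric] algebra_simps)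
    also have "\<dots> = - (2 * dt / 3) * tsum N (\<lambda>i j. Dx h v i j * Dx h v i j + Dy h v i j * Dy h v i j)"
      unfolding sbp_lap[OF pv pv] by simp
    also have "\<dots> \<le> 0" using pos(3) by (simp add: tsum_nonneg mult_nonneg_nonneg)
    finally show ?thesis .
  qed
  have lw: "lap h (\<lambda>a b. \<phi>1 a b - p a b) i j - lap h (\<lambda>a b. \<phi>2 a b - p a b) i j = lap h w i j" for i j
    unfolding w_def lap_diff by simp
  have vw: "v i j * w i j = (Sp N1 N2 (\<phi>1 i j) - Sp N1 N2 (\<phi>2 i j)) * w i j
      + (tx h \<phi>1 i j * w i j - tx h \<phi>2 i j * w i j) + (ty h \<phi>1 i j * w i j - ty h \<phi>2 i j * w i j)
      - A * dt * (w i j * lap h w i j)" for i j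
    unfolding v_def M1 M2 Fmu_def using lw[of i j] by (simp add: algebra_simps)
  have T1: "0 \<le> tsum N (\<lambda>i j. tx h \<phi>1 i j * w i j) - tsum N (\<lambda>i j. tx h \<phi>2 i j * w i j)"
    unfolding tx_sum[OF P1(1) pw] tx_sum[OF P2(1) pw] tsum_diff[symmetric]
    by (rule tsum_nonneg, unfold w_def, rule edge_mono) (use B1 pos in auto)
  have T2: "0 \<le> tsum N (\<lambda>i j. ty h \<phi>1 i j * w i j) - tsum N (\<lambda>i j. ty h \<phi>2 i j * w i j)"
    unfolding ty_sum[OF P1(1) pw] ty_sum[OF P2(1) pw] tsum_diff[symmetric]
    by (rule tsum_nonneg, unfold w_def, rule edge_mono) (use B1 pos in auto)
  have T3: "0 \<le> - tsum N (\<lambda>i j. w i j * lap h w i j)"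
    unfolding sbp_lap[OF pw pw] by (simp add: tsum_nonneg)
  have "tsum N (\<lambda>i j. v i j * w i j) = tsum N (\<lambda>i j. (Sp N1 N2 (\<phi>1 i j) - Sp N1 N2 (\<phi>2 i j)) * w i j)
      + (tsum N (\<lambda>i j. tx h \<phi>1 i j * w i j) - tsum N (\<lambda>i j. tx h \<phi>2 i j * w i j))
      + (tsum N (\<lambda>i j. ty h \<phi>1 i j * w i j) - tsum N (\<lambda>i j. ty h \<phi>2 i j * w i j))
      + A * dt * (- tsum N (\<lambda>i j. w i j * lap h w i j))"
    unfolding vw by (simp add: tsum_add tsum_diff tsum_cmult)
  then have Sle: "tsum N (\<lambda>i j. (Sp N1 N2 (\<phi>1 i j) - Sp N1 N2 (\<phi>2 i j)) * w i j) \<le> 0"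
    using S1 T1 T2 T3 pos(3,4) by (smt (verit) mult_nonneg_nonneg)
  have Snn: "0 \<le> (Sp N1 N2 (\<phi>1 i j) - Sp N1 N2 (\<phi>2 i j)) * w i j" for i j
    unfolding w_def by (rule Sp_mono_prod(1)) (use R1 R2 pos in auto)
  have eqI: "\<phi>1 i j = \<phi>2 i j" if "i \<in> {1..int N}" "j \<in> {1..int N}" for i j
  proof (rule ccontr)
    assume ne: "\<phi>1 i j \<noteq> \<phi>2 i j"
    have "0 < (Sp N1 N2 (\<phi>1 i j) - Sp N1 N2 (\<phi>2 i j)) * w i j"
      unfolding w_def by (rule Sp_mono_prod(2)) (use R1 R2 pos ne in auto)
    moreover have "(Sp N1 N2 (\<phi>1 i j) - Sp N1 N2 (\<phi>2 i j)) * w i j = 0"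
      by (rule tsum_nonneg_zero[OF _ Sle that]) (rule Snn)
    ultimately show False by simp
  qed
  have "\<phi>1 = \<phi>2"
  proof (intro ext)
    fix x y
    have "\<phi>1 x y = \<phi>1 (red N x) (red N y)" using per_red[OF P1(1)] by simp
    also have "\<dots> = \<phi>2 (red N x) (red N y)" by (rule eqI) (use red_range pos in auto)
    also have "\<dots> = \<phi>2 x y" using per_red[OF P2(1)] by simp
    finally show "\<phi>1 x y = \<phi>2 x y" .
  qed
  then show ?thesis using M1 M2 by simp
qed


definition ind :: "nat \<Rightarrow> int \<Rightarrow> int \<Rightarrow> gridfun" where
  "ind N a b = (\<lambda>x y. if red N x = a \<and> red N y = b then 1 else 0)"

lemma red_add_N: "red N (x + int N) = red N x"
proof -
  have e: "x + int N - 1 = (x - 1) + int N" by simp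
  show ?thesis unfolding red_def e by simp
qed

lemma per_ind: "periodic N (ind N a b)"
  unfolding periodic_def ind_def by (simp add: red_add_N)

lemma tsum_delta:
  assumes "a \<in> {1..int N}" "b \<in> {1..int N}"
  shows "tsum N (\<lambda>k1 k2. c k1 k2 * (if a = k1 \<and> b = k2 then 1 else 0)) = c a b"
proof -
  have "tsum N (\<lambda>k1 k2. c k1 k2 * (if a = k1 \<and> b = k2 then 1 else 0))
      = (\<Sum>k1\<in>{1..int N}. if k1 = a then c a b else 0)"
    unfolding tsum_def
    by (rule sum.cong[OF refl]) (use assms in \<open>auto simp: if_distrib cong: if_cong\<close>)
  also have "\<dots> = c a b" using assms by simp
  finally show ?thesis .
qed

lemma tsum_ind:
  assumes "a \<in> {1..int N}" "b \<in> {1..int N}"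
  shows "tsum N (\<lambda>i j. f i j * ind N a b i j) = f a b"
proof -
  have "tsum N (\<lambda>i j. f i j * ind N a b i j) = tsum N (\<lambda>i j. f i j * (if a = i \<and> b = j then 1 else 0))"
    by (rule tsum_cong) (auto simp: ind_def red_id)
  also have "\<dots> = f a b" by (rule tsum_delta[OF assms])
  finally show ?thesis .
qed

lemma tsum_const: "tsum N (\<lambda>i j. c) = real N * real N * c"
  unfolding tsum_def by simp

lemma tsum_single:
  assumes "\<And>i j. i \<in> {1..int N} \<Longrightarrow> j \<in> {1..int N} \<Longrightarrow> 0 \<le> f i j" "a \<in> {1..int N}" "b \<in> {1..int N}"
  shows "f a b \<le> tsum N f"
proof -
  have "f a b = tsum N (\<lambda>i j. f i j * ind N a b i j)" using tsum_ind[OF assms(2,3)] by simp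
  also have "\<dots> \<le> tsum N f"
    by (rule tsum_mono) (use assms(1) in \<open>auto simp: ind_def\<close>)
  finally show ?thesis .
qed

lemma tsum_abs: "\<bar>tsum N f\<bar> \<le> tsum N (\<lambda>i j. \<bar>f i j\<bar>)"
  unfolding tsum_def by (rule order_trans[OF sum_abs]) (auto intro!: sum_mono sum_abs)

lemma cont_coord [continuous_intros]:
  "continuous_on S (\<lambda>\<phi>::gridfun. \<phi> i j)"
proof -
  have a: "continuous_on UNIV (\<lambda>\<phi>::gridfun. \<phi> i)" by simp
  have b: "continuous_on UNIV (\<lambda>g::int \<Rightarrow> real. g j)" by simp
  have "continuous_on UNIV ((\<lambda>g::int \<Rightarrow> real. g j) \<circ> (\<lambda>\<phi>::gridfun. \<phi> i))"
    by (rule continuous_on_compose[OF a]) (rule continuous_on_subset[OF b], simp)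
  then have "continuous_on UNIV (\<lambda>\<phi>::gridfun. \<phi> i j)" by (simp add: comp_def)
  then show ?thesis by (rule continuous_on_subset) simp
qed

lemma cont_tsum [continuous_intros]:
  "(\<And>i j. continuous_on S (\<lambda>\<phi>. F \<phi> i j)) \<Longrightarrow> continuous_on S (\<lambda>\<phi>. tsum N (F \<phi>))"
  unfolding tsum_def by (intro continuous_intros) auto

lemma compact_box: "compact {\<phi>::gridfun. \<forall>i j. a \<le> \<phi> i j \<and> \<phi> i j \<le> b}"
proof -
  have c1: "compact (PiE (UNIV::int set) (\<lambda>_. {a..b::real}))"
  proof -
    have "compactin (product_topology (\<lambda>_. euclidean) (UNIV::int set)) (PiE UNIV (\<lambda>_. {a..b::real}))"
      by (subst compactin_PiE) simp
    then show ?thesis by (simp add: euclidean_product_topology)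
  qed
  have "compactin (product_topology (\<lambda>_. euclidean) (UNIV::int set)) (PiE UNIV (\<lambda>_. PiE (UNIV::int set) (\<lambda>_. {a..b::real})))"
    by (subst compactin_PiE) (use c1 in simp)
  then have "compact (PiE (UNIV::int set) (\<lambda>_. PiE (UNIV::int set) (\<lambda>_. {a..b::real})))"
    by (simp add: euclidean_product_topology)
  moreover have "PiE (UNIV::int set) (\<lambda>_. PiE (UNIV::int set) (\<lambda>_. {a..b::real})) = {\<phi>::gridfun. \<forall>i j. a \<le> \<phi> i j \<and> \<phi> i j \<le> b}"
    by (auto simp: PiE_iff)
  ultimately show ?thesis by simp
qed

lemma closed_per: "closed {\<phi>. periodic N \<phi>}"
  unfolding periodic_def
  by (intro closed_Collect_all closed_Collect_conj closed_Collect_eq) (intro continuous_intros)+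

lemma closed_tsum_eq: "closed {\<phi>. tsum N \<phi> = c}"
  by (intro closed_Collect_eq) (intro continuous_intros)+

lemma closed_pt_eq: "closed {\<phi>::gridfun. \<phi> a b = c}"
  by (intro closed_Collect_eq) (intro continuous_intros)+

definition padd :: "gridfun \<Rightarrow> real \<Rightarrow> gridfun \<Rightarrow> gridfun" where
  "padd \<phi> s \<eta> = (\<lambda>i j. \<phi> i j + s * \<eta> i j)"

lemma min_deriv:
  fixes J :: "gridfun \<Rightarrow> real"
  assumes "\<forall>y\<in>K. J x \<le> J y" "DERIV (\<lambda>s. J (padd x s \<eta>)) 0 :> l"
    "d > 0" "\<And>s. \<bar>s\<bar> < d \<Longrightarrow> padd x s \<eta> \<in> K"
  shows "l = 0"
proof (rule DERIV_local_min[OF assms(2,3)], intro allI impI)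
  fix y :: real assume "\<bar>0 - y\<bar> < d"
  then have "padd x y \<eta> \<in> K" using assms(4) by simp
  then have "J x \<le> J (padd x y \<eta>)" using assms(1) by simp
  moreover have "padd x 0 \<eta> = x" unfolding padd_def by simp
  ultimately show "J (padd x 0 \<eta>) \<le> J (padd x y \<eta>)" by simp
qed

lemma min_deriv_right:
  fixes J :: "gridfun \<Rightarrow> real"
  assumes "\<forall>y\<in>K. J x \<le> J y" "DERIV (\<lambda>s. J (padd x s \<eta>)) 0 :> l"
    "d > 0" "\<And>s. 0 < s \<Longrightarrow> s < d \<Longrightarrow> padd x s \<eta> \<in> K"
  shows "0 \<le> l"
proof (rule ccontr)
  assume "\<not> 0 \<le> l"
  then have "l < 0" by simp
  from DERIV_neg_dec_right[OF assms(2) this] obtain e where e: "e > 0"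
    "\<And>h. h > 0 \<Longrightarrow> h < e \<Longrightarrow> J (padd x (0 + h) \<eta>) < J (padd x 0 \<eta>)" by blast
  define s where "s = min e d / 2"
  have s: "0 < s" "s < e" "s < d" unfolding s_def using e assms(3) by auto
  have "J (padd x s \<eta>) < J (padd x 0 \<eta>)" using e(2)[OF s(1,2)] by simp
  moreover have "padd x 0 \<eta> = x" unfolding padd_def by simp
  moreover have "J x \<le> J (padd x s \<eta>)" using assms(1) assms(4)[OF s(1,3)] by simp
  ultimately show False by simp
qed

lemma tsum_DERIV:
  assumes "\<And>i j. DERIV (\<lambda>s. F s i j) x :> F' i j"
  shows "DERIV (\<lambda>s. tsum N (F s)) x :> tsum N F'"
  unfolding tsum_def by (intro DERIV_sum) (rule assms)

lemma per_padd: "periodic N \<phi> \<Longrightarrow> periodic N \<eta> \<Longrightarrow> periodic N (padd \<phi> s \<eta>)"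
  unfolding padd_def by (rule per_comp2)


lemma telescope:
  fixes f :: "int \<Rightarrow> real"
  shows "\<bar>f (1 + int k) - f 1\<bar> \<le> (\<Sum>i\<in>{1..int k}. \<bar>f (i+1) - f i\<bar>)"
proof (induction k)
  case 0 then show ?case by simp
next
  case (Suc k)
  have e: "{1..int (Suc k)} = insert (int k + 1) {1..int k}" by auto
  have "\<bar>f (1 + int (Suc k)) - f 1\<bar> \<le> \<bar>f (1 + int k + 1) - f (1 + int k)\<bar> + \<bar>f (1 + int k) - f 1\<bar>"
    by simp
  also have "\<dots> \<le> \<bar>f (int k + 1 + 1) - f (int k + 1)\<bar> + (\<Sum>i\<in>{1..int k}. \<bar>f (i+1) - f i\<bar>)"
    using Suc by (simp add: add.commute)
  also have "\<dots> = (\<Sum>i\<in>{1..int (Suc k)}. \<bar>f (i+1) - f i\<bar>)" unfolding e by simp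
  finally show ?case .
qed

lemma telescope2:
  fixes f :: "int \<Rightarrow> real"
  assumes "x \<in> {1..int N}"
  shows "\<bar>f x - f 1\<bar> \<le> (\<Sum>i\<in>{1..int N}. \<bar>f (i+1) - f i\<bar>)"
proof -
  define k where "k = nat (x - 1)"
  have x: "x = 1 + int k" unfolding k_def using assms by simp
  have "\<bar>f x - f 1\<bar> \<le> (\<Sum>i\<in>{1..int k}. \<bar>f (i+1) - f i\<bar>)" unfolding x by (rule telescope)
  also have "\<dots> \<le> (\<Sum>i\<in>{1..int N}. \<bar>f (i+1) - f i\<bar>)"
    by (rule sum_mono2) (use assms x in auto)
  finally show ?thesis .
qed

lemma path_bound:
  assumes h: "h > 0" and xy: "x \<in> {1..int N}" "y \<in> {1..int N}"
  shows "\<bar>\<psi> x y - \<psi> 1 1\<bar> \<le> h * (tsum N (\<lambda>i j. \<bar>Dx h \<psi> i j\<bar>) + tsum N (\<lambda>i j. \<bar>Dy h \<psi> i j\<bar>))"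
proof -
  have N1: "1 \<in> {1..int N}" using xy by auto
  have a: "\<bar>\<psi> x 1 - \<psi> 1 1\<bar> \<le> h * tsum N (\<lambda>i j. \<bar>Dx h \<psi> i j\<bar>)"
  proof -
    have "\<bar>\<psi> x 1 - \<psi> 1 1\<bar> \<le> (\<Sum>i\<in>{1..int N}. \<bar>\<psi> (i+1) 1 - \<psi> i 1\<bar>)"
      by (rule telescope2[OF xy(1), of "\<lambda>i. \<psi> i 1"])
    also have "\<dots> = h * (\<Sum>i\<in>{1..int N}. \<bar>Dx h \<psi> i 1\<bar>)"
      unfolding Dx_def sum_distrib_left using h by (intro sum.cong) (auto simp: abs_divide)
    also have "(\<Sum>i\<in>{1..int N}. \<bar>Dx h \<psi> i 1\<bar>) \<le> tsum N (\<lambda>i j. \<bar>Dx h \<psi> i j\<bar>)"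
      unfolding tsum_def by (intro sum_mono member_le_sum[OF N1]) auto
    finally show ?thesis using h by simp
  qed
  have b: "\<bar>\<psi> x y - \<psi> x 1\<bar> \<le> h * tsum N (\<lambda>i j. \<bar>Dy h \<psi> i j\<bar>)"
  proof -
    have "\<bar>\<psi> x y - \<psi> x 1\<bar> \<le> (\<Sum>j\<in>{1..int N}. \<bar>\<psi> x (j+1) - \<psi> x j\<bar>)"
      by (rule telescope2[OF xy(2), of "\<lambda>j. \<psi> x j"])
    also have "\<dots> = h * (\<Sum>j\<in>{1..int N}. \<bar>Dy h \<psi> x j\<bar>)"
      unfolding Dy_def sum_distrib_left using h by (intro sum.cong) (auto simp: abs_divide)
    also have "(\<Sum>j\<in>{1..int N}. \<bar>Dy h \<psi> x j\<bar>) \<le> tsum N (\<lambda>i j. \<bar>Dy h \<psi> i j\<bar>)"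
      unfolding tsum_def by (rule member_le_sum[OF xy(1), of "\<lambda>i. \<Sum>j\<in>{1..int N}. \<bar>Dy h \<psi> i j\<bar>"]) (auto intro: sum_nonneg)
    finally show ?thesis using h by simp
  qed
  have "\<bar>\<psi> x y - \<psi> 1 1\<bar> \<le> \<bar>\<psi> x y - \<psi> x 1\<bar> + \<bar>\<psi> x 1 - \<psi> 1 1\<bar>" by simp
  then show ?thesis using a b by (simp add: distrib_left)
qed

lemma amgm_abs:
  fixes a e :: real
  assumes "e > 0"
  shows "\<bar>a\<bar> \<le> a^2 / (2*e) + e / 2"
proof -
  have "0 \<le> (\<bar>a\<bar> - e)^2" by simp
  then have "2 * e * \<bar>a\<bar> \<le> a^2 + e^2" by (simp add: power2_eq_square algebra_simps)
  then show ?thesis using assms by (simp add: field_simps power2_eq_square)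
qed

lemma Dx_padd: "Dx h (padd \<psi> s \<eta>) i j = Dx h \<psi> i j + s * Dx h \<eta> i j"
  unfolding Dx_def padd_def by (simp add: divide_inverse algebra_simps)
lemma Dy_padd: "Dy h (padd \<psi> s \<eta>) i j = Dy h \<psi> i j + s * Dy h \<eta> i j"
  unfolding Dy_def padd_def by (simp add: divide_inverse algebra_simps)

definition "Qp N h b \<psi> = (1/2) * tsum N (\<lambda>i j. (Dx h \<psi> i j)^2 + (Dy h \<psi> i j)^2) + tsum N (\<lambda>i j. b i j * \<psi> i j)"

lemma Qp_deriv:
  "DERIV (\<lambda>s. Qp N h b (padd \<psi> s \<eta>)) 0 :>
     tsum N (\<lambda>i j. Dx h \<psi> i j * Dx h \<eta> i j + Dy h \<psi> i j * Dy h \<eta> i j) + tsum N (\<lambda>i j. b i j * \<eta> i j)"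
proof -
  have e: "Qp N h b (padd \<psi> s \<eta>) = (1/2) * tsum N (\<lambda>i j. (Dx h \<psi> i j + s * Dx h \<eta> i j)^2 + (Dy h \<psi> i j + s * Dy h \<eta> i j)^2)
      + tsum N (\<lambda>i j. b i j * (\<psi> i j + s * \<eta> i j))" for s
    unfolding Qp_def Dx_padd Dy_padd by (simp add: padd_def)
  have d1: "DERIV (\<lambda>s. tsum N (\<lambda>i j. (Dx h \<psi> i j + s * Dx h \<eta> i j)^2 + (Dy h \<psi> i j + s * Dy h \<eta> i j)^2)) 0
     :> tsum N (\<lambda>i j. 2 * (Dx h \<psi> i j * Dx h \<eta> i j + Dy h \<psi> i j * Dy h \<eta> i j))"
    by (rule tsum_DERIV) (auto intro!: derivative_eq_intros simp: algebra_simps)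
  have d2: "DERIV (\<lambda>s. tsum N (\<lambda>i j. b i j * (\<psi> i j + s * \<eta> i j))) 0 :> tsum N (\<lambda>i j. b i j * \<eta> i j)"
    by (rule tsum_DERIV) (auto intro!: derivative_eq_intros)
  have "DERIV (\<lambda>s. Qp N h b (padd \<psi> s \<eta>)) 0 :>
     (1/2) * tsum N (\<lambda>i j. 2 * (Dx h \<psi> i j * Dx h \<eta> i j + Dy h \<psi> i j * Dy h \<eta> i j)) + tsum N (\<lambda>i j. b i j * \<eta> i j)"
    unfolding e by (intro DERIV_add DERIV_cmult d1 d2)
  moreover have "tsum N (\<lambda>i j. 2 * (Dx h \<psi> i j * Dx h \<eta> i j + Dy h \<psi> i j * Dy h \<eta> i j))
     = 2 * tsum N (\<lambda>i j. Dx h \<psi> i j * Dx h \<eta> i j + Dy h \<psi> i j * Dy h \<eta> i j)" by (rule tsum_cmult)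
  ultimately show ?thesis by simp
qed


lemma finite_min_pt:
  fixes f :: "int \<Rightarrow> int \<Rightarrow> real"
  assumes "N > 0"
  shows "\<exists>a\<in>{1..int N}. \<exists>b\<in>{1..int N}. \<forall>i\<in>{1..int N}. \<forall>j\<in>{1..int N}. f a b \<le> f i j"
proof -
  let ?S = "(\<lambda>(i,j). f i j) ` ({1..int N} \<times> {1..int N})"
  have fin: "finite ?S" by simp
  have ne: "?S \<noteq> {}" using assms by auto
  have "Min ?S \<in> ?S" by (rule Min_in[OF fin ne])
  then obtain a b where ab: "a \<in> {1..int N}" "b \<in> {1..int N}" "Min ?S = f a b" by auto
  have "f a b \<le> f i j" if "i \<in> {1..int N}" "j \<in> {1..int N}" for i j
    unfolding ab(3)[symmetric] by (rule Min_le[OF fin]) (use that in auto)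
  then show ?thesis using ab by blast
qed

lemma finite_max_pt:
  fixes f :: "int \<Rightarrow> int \<Rightarrow> real"
  assumes "N > 0"
  shows "\<exists>a\<in>{1..int N}. \<exists>b\<in>{1..int N}. \<forall>i\<in>{1..int N}. \<forall>j\<in>{1..int N}. f i j \<le> f a b"
  using finite_min_pt[OF assms, of "\<lambda>i j. - f i j"] by auto

lemma poisson:
  assumes h: "h > 0" and N: "N > 0" and pb: "periodic N b" and sb: "tsum N b = 0"
  shows "\<exists>\<psi>. periodic N \<psi> \<and> (\<forall>x y. lap h \<psi> x y = b x y)"
proof -
  define B1 where "B1 = tsum N (\<lambda>i j. \<bar>b i j\<bar>)"
  have B1: "B1 \<ge> 0" unfolding B1_def by (rule tsum_nonneg) simp
  define R where "R = 4 * h^2 * (real N)^2 * (B1 + 1)"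
  have Rp: "R > 0" unfolding R_def using h N B1 by simp
  define K where "K = {\<psi>::gridfun. \<forall>i j. - R \<le> \<psi> i j \<and> \<psi> i j \<le> R} \<inter> {\<psi>. periodic N \<psi>} \<inter> {\<psi>. \<psi> 1 1 = 0}"
  have cK: "compact K" unfolding K_def
    by (intro compact_Int_closed closed_per closed_pt_eq compact_box)
  have zK: "(\<lambda>i j. 0) \<in> K" unfolding K_def using Rp per_const[of N 0] by auto
  have Q0: "Qp N h b (\<lambda>i j. 0) = 0" unfolding Qp_def Dx_def Dy_def by (simp add: tsum_zero)
  have contQ: "continuous_on K (Qp N h b)"
    unfolding Qp_def Dx_def Dy_def using h by (intro continuous_intros) auto
  obtain \<psi> where \<psi>K: "\<psi> \<in> K" and \<psi>min: "\<forall>y\<in>K. Qp N h b \<psi> \<le> Qp N h b y"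
    using continuous_attains_inf[OF cK _ contQ] zK by blast
  have pp: "periodic N \<psi>" and \<psi>11: "\<psi> 1 1 = 0" and box: "\<forall>i j. - R \<le> \<psi> i j \<and> \<psi> i j \<le> R"
    using \<psi>K unfolding K_def by auto
  have \<psi>R: "\<bar>\<psi> i j\<bar> \<le> R" for i j using box[rule_format, of i j] by (simp add: abs_le_iff)
  have Qle0: "Qp N h b \<psi> \<le> 0" using \<psi>min zK Q0 by force
  have strict: "\<bar>\<psi> x y\<bar> < R" for x y
  proof (rule ccontr)
    assume "\<not> \<bar>\<psi> x y\<bar> < R"
    then have eq: "\<bar>\<psi> (red N x) (red N y)\<bar> \<ge> R" using per_red[OF pp] by simp
    define G where "G = tsum N (\<lambda>i j. (Dx h \<psi> i j)^2 + (Dy h \<psi> i j)^2)"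
    define e where "e = R / (2 * h * (real N)^2)"
    have ep: "e > 0" unfolding e_def using Rp h N by simp
    have "R \<le> \<bar>\<psi> (red N x) (red N y) - \<psi> 1 1\<bar>" using eq \<psi>11 by simp
    also have "\<dots> \<le> h * (tsum N (\<lambda>i j. \<bar>Dx h \<psi> i j\<bar>) + tsum N (\<lambda>i j. \<bar>Dy h \<psi> i j\<bar>))"
      by (rule path_bound[OF h]) (use red_range N in auto)
    also have "tsum N (\<lambda>i j. \<bar>Dx h \<psi> i j\<bar>) + tsum N (\<lambda>i j. \<bar>Dy h \<psi> i j\<bar>)
        \<le> tsum N (\<lambda>i j. ((Dx h \<psi> i j)^2 + (Dy h \<psi> i j)^2) / (2*e) + e)"
      unfolding tsum_add[symmetric]
    proof (rule tsum_mono)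
      fix i j
      have "\<bar>Dx h \<psi> i j\<bar> \<le> (Dx h \<psi> i j)^2 / (2*e) + e / 2" by (rule amgm_abs[OF ep])
      moreover have "\<bar>Dy h \<psi> i j\<bar> \<le> (Dy h \<psi> i j)^2 / (2*e) + e / 2" by (rule amgm_abs[OF ep])
      ultimately show "\<bar>Dx h \<psi> i j\<bar> + \<bar>Dy h \<psi> i j\<bar> \<le> ((Dx h \<psi> i j)^2 + (Dy h \<psi> i j)^2) / (2*e) + e"
        by (simp add: add_divide_distrib)
    qed
    also have "\<dots> = G / (2*e) + real N * real N * e"
      unfolding G_def by (simp add: tsum_add tsum_divide tsum_const)
    finally have "R \<le> h * (G / (2*e) + real N * real N * e)" using h by (simp add: mult_left_mono)
    moreover have "h * (real N * real N * e) = R / 2" unfolding e_def using h N by (simp add: field_simps power2_eq_square)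
    ultimately have "R \<le> h * G / (2*e) + R / 2" by (simp add: distrib_left)
    then have "R / 2 \<le> h * G / (2 * e)" by linarith
    moreover have "h * G / (2 * e) = h * G * (h * (real N)^2) / R" unfolding e_def using h N Rp by (simp add: field_simps)
    ultimately have "R / 2 \<le> h * G * (h * (real N)^2) / R" by simp
    then have "R / 2 * R \<le> h * G * (h * (real N)^2)" using Rp by (simp add: le_divide_eq)
    then have "R^2 \<le> G * (2 * h^2 * (real N)^2)" by (simp add: power2_eq_square algebra_simps)
    moreover have "2 * h^2 * (real N)^2 > 0" using h N by simp
    ultimately have Gb: "R^2 / (2 * h^2 * (real N)^2) \<le> G" by (simp add: divide_le_eq)
    have "\<bar>tsum N (\<lambda>i j. b i j * \<psi> i j)\<bar> \<le> tsum N (\<lambda>i j. \<bar>b i j\<bar> * R)"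
      by (rule order_trans[OF tsum_abs], rule tsum_mono) (use \<psi>R in \<open>auto simp: abs_mult intro: mult_left_mono\<close>)
    also have "\<dots> = B1 * R" unfolding B1_def by (rule tsum_multc)
    finally have bb: "\<bar>tsum N (\<lambda>i j. b i j * \<psi> i j)\<bar> \<le> B1 * R" .
    have "Qp N h b \<psi> \<ge> G / 2 - B1 * R" unfolding Qp_def G_def[symmetric] using bb by linarith
    moreover have "G / 2 - B1 * R \<ge> R" 
    proof -
      have "R^2 / (4 * h^2 * (real N)^2) = R * (B1 + 1)" unfolding R_def using h N by (simp add: power2_eq_square field_simps)
      then show ?thesis using Gb by (simp add: algebra_simps)
    qed
    ultimately show False using Qle0 Rp by simp
  qed
  let ?S = "(\<lambda>(i,j). \<bar>\<psi> i j\<bar>) ` ({1..int N} \<times> {1..int N})"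
  define M where "M = Max ?S"
  have finS: "finite ?S" by simp
  have neS: "?S \<noteq> {}" using N by auto
  have MR: "M < R" unfolding M_def using Max_in[OF finS neS] strict by auto
  have \<psi>M: "\<bar>\<psi> x y\<bar> \<le> M" for x y
  proof -
    have "\<bar>\<psi> x y\<bar> = \<bar>\<psi> (red N x) (red N y)\<bar>" using per_red[OF pp] by simp
    also have "\<dots> \<le> M" unfolding M_def by (rule Max_ge[OF finS]) (use red_range N in auto)
    finally show ?thesis .
  qed
  have perlap: "periodic N (lap h \<psi>)" by (rule per_lap[OF pp])
  have EL: "lap h \<psi> a c = b a c" if ac: "a \<in> {1..int N}" "c \<in> {1..int N}" "(a, c) \<noteq> (1, 1)" for a c
  proof -
    define \<eta> where "\<eta> = ind N a c"
    have pe: "periodic N \<eta>" unfolding \<eta>_def by (rule per_ind)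
    have inK: "padd \<psi> s \<eta> \<in> K" if "\<bar>s\<bar> < R - M" for s
    proof -
      have ab: "\<bar>padd \<psi> s \<eta> i j\<bar> < R" for i j
      proof -
        have "\<bar>padd \<psi> s \<eta> i j\<bar> \<le> \<bar>\<psi> i j\<bar> + \<bar>s\<bar> * \<bar>\<eta> i j\<bar>" unfolding padd_def by (simp add: abs_mult[symmetric] abs_triangle_ineq)
        also have "\<dots> \<le> M + \<bar>s\<bar>" using \<psi>M[of i j] unfolding \<eta>_def ind_def by auto
        finally show ?thesis using that by simp
      qed
      then have "\<forall>i j. - R \<le> padd \<psi> s \<eta> i j \<and> padd \<psi> s \<eta> i j \<le> R"
      proof (intro allI)
        fix i j show "- R \<le> padd \<psi> s \<eta> i j \<and> padd \<psi> s \<eta> i j \<le> R" using ab[of i j] by (simp add: abs_less_iff)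
      qed
      moreover have "padd \<psi> s \<eta> 1 1 = 0" unfolding padd_def \<eta>_def ind_def using \<psi>11 ac
        by (auto simp: red_def)
      moreover have "periodic N (padd \<psi> s \<eta>)" by (rule per_padd[OF pp pe])
      ultimately show ?thesis unfolding K_def by blast
    qed
    have "tsum N (\<lambda>i j. Dx h \<psi> i j * Dx h \<eta> i j + Dy h \<psi> i j * Dy h \<eta> i j) + tsum N (\<lambda>i j. b i j * \<eta> i j) = 0"
      by (rule min_deriv[OF \<psi>min Qp_deriv, of "R - M"]) (use MR inK in auto)
    moreover have "tsum N (\<lambda>i j. Dx h \<psi> i j * Dx h \<eta> i j + Dy h \<psi> i j * Dy h \<eta> i j) = - tsum N (\<lambda>i j. \<eta> i j * lap h \<psi> i j)"
      using sbp_lap[OF pe pp, of h] by (simp add: mult.commute)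
    moreover have "tsum N (\<lambda>i j. \<eta> i j * lap h \<psi> i j) = lap h \<psi> a c"
      using tsum_ind[OF ac(1,2), of "lap h \<psi>"] unfolding \<eta>_def by (simp add: mult.commute)
    moreover have "tsum N (\<lambda>i j. b i j * \<eta> i j) = b a c" unfolding \<eta>_def by (rule tsum_ind[OF ac(1,2)])
    ultimately show ?thesis by simp
  qed
  have one: "1 \<in> {1..int N}" using N by simp
  have EL11: "lap h \<psi> 1 1 = b 1 1"
  proof -
    have "tsum N (\<lambda>i j. lap h \<psi> i j - b i j) = tsum N (\<lambda>i j. (lap h \<psi> 1 1 - b 1 1) * ind N 1 1 i j)"
    proof (rule tsum_cong)
      fix i j assume ij: "i \<in> {1..int N}" "j \<in> {1..int N}"
      show "lap h \<psi> i j - b i j = (lap h \<psi> 1 1 - b 1 1) * ind N 1 1 i j"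
      proof (cases "(i, j) = (1, 1)")
        case True then show ?thesis by (simp add: ind_def red_def)
      next
        case False then show ?thesis using EL[OF ij False] ij by (auto simp: ind_def red_id)
      qed
    qed
    also have "\<dots> = lap h \<psi> 1 1 - b 1 1" using tsum_ind[OF one one, of "\<lambda>i j. lap h \<psi> 1 1 - b 1 1"] by simp
    finally have "lap h \<psi> 1 1 - b 1 1 = tsum N (lap h \<psi>) - tsum N b" by (simp add: tsum_diff)
    then show ?thesis using tsum_lap[OF pp] sb by simp
  qed
  have "lap h \<psi> x y = b x y" for x y
  proof -
    have "lap h \<psi> x y = lap h \<psi> (red N x) (red N y)" using per_red[OF perlap] by simp
    also have "\<dots> = b (red N x) (red N y)"
      using EL[of "red N x" "red N y"] EL11 red_range[OF N] by (cases "(red N x, red N y) = (1,1)") auto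
    also have "\<dots> = b x y" using per_red[OF pb] by simp
    finally show ?thesis .
  qed
  then show ?thesis using pp by blast
qed


lemma lap_expand: "lap h f x y = (f (x+1) y + f (x - 1) y + f x (y+1) + f x (y - 1) - 4 * f x y) / h^2"
  unfolding lap_def dx_def dy_def Dx_def Dy_def by (simp add: power2_eq_square divide_inverse algebra_simps)

lemma lap_tsum_lin:
  "lap h (\<lambda>x y. tsum N (\<lambda>k1 k2. c k1 k2 * G k1 k2 x y)) x y = tsum N (\<lambda>k1 k2. c k1 k2 * lap h (G k1 k2) x y)"
proof -
  have "tsum N (\<lambda>k1 k2. c k1 k2 * lap h (G k1 k2) x y) =
     tsum N (\<lambda>k1 k2. (c k1 k2 * G k1 k2 (x+1) y + c k1 k2 * G k1 k2 (x - 1) y + c k1 k2 * G k1 k2 x (y+1)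
        + c k1 k2 * G k1 k2 x (y - 1) - 4 * (c k1 k2 * G k1 k2 x y)) / h^2)"
    unfolding lap_expand by (rule tsum_cong) (simp add: algebra_simps)
  also have "\<dots> = lap h (\<lambda>x y. tsum N (\<lambda>k1 k2. c k1 k2 * G k1 k2 x y)) x y"
    unfolding lap_expand tsum_divide tsum_diff tsum_add tsum_cmult by simp
  finally show ?thesis by simp
qed

lemma tsum_ind1: "a \<in> {1..int N} \<Longrightarrow> b \<in> {1..int N} \<Longrightarrow> tsum N (ind N a b) = 1"
  using tsum_ind[of a N b "\<lambda>i j. 1"] by simp

locale ctx =
  fixes N1 N2 chi h dt A :: real and N :: nat and p q :: gridfun
  assumes N1: "N1 > 0" and N2: "N2 > 0" and dt: "dt > 0" and A: "A > 0" and h: "h > 0" and N: "N > 0"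
    and pp: "periodic N p" and pq: "periodic N q"
    and prange: "\<And>i j. 0 < p i j \<and> p i j < 1 / rho N1 N2"
    and qrange: "\<And>i j. 0 < q i j \<and> q i j < 1 / rho N1 N2"
    and mean: "tsum N p = tsum N q"
begin

definition "gr k1 k2 = (SOME \<psi>. periodic N \<psi> \<and> (\<forall>x y. lap h \<psi> x y = ind N k1 k2 x y - 1 / (real N)^2))"

lemma gr:
  assumes "k1 \<in> {1..int N}" "k2 \<in> {1..int N}"
  shows "periodic N (gr k1 k2) \<and> (\<forall>x y. lap h (gr k1 k2) x y = ind N k1 k2 x y - 1 / (real N)^2)"
proof -
  have pb: "periodic N (\<lambda>x y. ind N k1 k2 x y - 1 / (real N)^2)" by (rule per_comp1[OF per_ind])
  have "tsum N (\<lambda>x y. ind N k1 k2 x y - 1 / (real N)^2) = 1 - real N * real N * (1 / (real N)^2)"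
    unfolding tsum_diff tsum_const tsum_ind1[OF assms] by simp
  also have "\<dots> = 0" using N by (simp add: power2_eq_square)
  finally have "\<exists>\<psi>. periodic N \<psi> \<and> (\<forall>x y. lap h \<psi> x y = ind N k1 k2 x y - 1 / (real N)^2)"
    using poisson[OF h N pb] by simp
  then show ?thesis unfolding gr_def by (rule someI_ex)
qed

definition "Gop v x y = tsum N (\<lambda>k1 k2. v k1 k2 * gr k1 k2 x y)"

lemma per_Gop: "periodic N (Gop v)"
proof (rule periodicI)
  fix x y
  show "Gop v (x + int N) y = Gop v x y" unfolding Gop_def
    by (rule tsum_cong) (use gr in \<open>simp add: perD1\<close>)
  show "Gop v x (y + int N) = Gop v x y" unfolding Gop_def
    by (rule tsum_cong) (use gr in \<open>simp add: perD2\<close>)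
qed

lemma lap_Gop:
  assumes "periodic N v"
  shows "lap h (Gop v) x y = v x y - tsum N v / (real N)^2"
proof -
  have "lap h (Gop v) x y = tsum N (\<lambda>k1 k2. v k1 k2 * lap h (gr k1 k2) x y)"
    unfolding Gop_def[abs_def] by (rule lap_tsum_lin)
  also have "\<dots> = tsum N (\<lambda>k1 k2. v k1 k2 * (if red N x = k1 \<and> red N y = k2 then 1 else 0) - v k1 k2 * (1 / (real N)^2))"
    by (rule tsum_cong) (use gr in \<open>simp add: ind_def right_diff_distrib\<close>)
  also have "\<dots> = v (red N x) (red N y) - tsum N v / (real N)^2"
    unfolding tsum_diff tsum_delta[OF red_range[OF N] red_range[OF N]] tsum_multc by simp
  also have "\<dots> = v x y - tsum N v / (real N)^2" using per_red[OF assms] by simp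
  finally show ?thesis .
qed

lemma Gop_sym:
  assumes "periodic N u" "periodic N v" "tsum N u = 0" "tsum N v = 0"
  shows "tsum N (\<lambda>i j. u i j * Gop v i j) = tsum N (\<lambda>i j. v i j * Gop u i j)"
proof -
  have lu: "lap h (Gop u) i j = u i j" for i j using lap_Gop[OF assms(1)] assms(3) by simp
  have lv: "lap h (Gop v) i j = v i j" for i j using lap_Gop[OF assms(2)] assms(4) by simp
  have "tsum N (\<lambda>i j. u i j * Gop v i j) = tsum N (\<lambda>i j. Gop v i j * lap h (Gop u) i j)"
    unfolding lu by (simp add: mult.commute)
  also have "\<dots> = tsum N (\<lambda>i j. Gop u i j * lap h (Gop v) i j)" by (rule sbp_lap_sym[OF per_Gop per_Gop])
  also have "\<dots> = tsum N (\<lambda>i j. v i j * Gop u i j)" unfolding lv by (simp add: mult.commute)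
  finally show ?thesis .
qed

end



definition "Sfun al r x = al * (x * ln x - x) + (1 - r * x) * ln (1 - r * x) + r * x"

lemma DERIV_dir:
  fixes f :: "real \<Rightarrow> real"
  assumes "DERIV f x :> f'"
  shows "DERIV (\<lambda>s. f (x + s * e)) 0 :> f' * e"
proof -
  have a: "DERIV f ((\<lambda>s. x + s * e) 0) :> f'" using assms by simp
  have b: "DERIV (\<lambda>s. x + s * e) 0 :> e" by (auto intro!: derivative_eq_intros)
  show ?thesis using DERIV_chain2[OF a b] by simp
qed

lemma DERIV_Sfun0:
  fixes x al r :: real
  assumes "0 < x" "0 < 1 - r * x"
  shows "DERIV (Sfun al r) x :> al * ln x - r * ln (1 - r * x)"
proof -
  have D1: "DERIV (\<lambda>z. z * ln z - z) x :> 1 * ln x + 1 / x * x - 1"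
    by (rule DERIV_diff[OF DERIV_mult[OF DERIV_ident DERIV_ln_divide[OF assms(1)]] DERIV_ident])
  have D2: "DERIV (\<lambda>z. ln (1 - r * z)) x :> 1 / (1 - r * x) * (0 - r * 1)"
    by (rule DERIV_chain2[OF DERIV_ln_divide[OF assms(2)] DERIV_diff[OF DERIV_const DERIV_cmult[OF DERIV_ident]]])
  have D3: "DERIV (\<lambda>z. (1 - r * z) * ln (1 - r * z)) x :> (0 - r * 1) * ln (1 - r * x) + 1 / (1 - r * x) * (0 - r * 1) * (1 - r * x)"
    by (rule DERIV_mult[OF DERIV_diff[OF DERIV_const DERIV_cmult[OF DERIV_ident]] D2])
  have D4: "DERIV (Sfun al r) x :> al * (1 * ln x + 1 / x * x - 1) + ((0 - r * 1) * ln (1 - r * x) + 1 / (1 - r * x) * (0 - r * 1) * (1 - r * x)) + r * 1"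
    unfolding Sfun_def[abs_def] by (rule DERIV_add[OF DERIV_add[OF DERIV_cmult[OF D1] D3] DERIV_cmult[OF DERIV_ident]])
  have e1: "1 / x * x = 1" using assms by simp
  have e2: "1 / (1 - r * x) * (0 - r * 1) * (1 - r * x) = - r" using assms by simp
  show ?thesis using D4 unfolding e1 e2 by (simp add: algebra_simps)
qed

lemma DERIV_Sfun:
  fixes x e al r :: real
  assumes "0 < x" "0 < 1 - r * x"
  shows "DERIV (\<lambda>s. Sfun al r (x + s * e)) 0 :> (al * ln x - r * ln (1 - r * x)) * e"
  by (rule DERIV_dir[OF DERIV_Sfun0[OF assms]])

lemma DERIV_kappa:
  fixes x e :: real
  assumes "0 < x" "x < 1"
  shows "DERIV (\<lambda>s. kappa (x + s * e)) 0 :> kappap x * e"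
proof -
  have nz: "36 * x * (1 - x) \<noteq> 0" using assms by simp
  have "DERIV (\<lambda>s. 1 / (36 * (x + s * e) * (1 - (x + s * e)))) 0 :> - (36 * e * (1 - x) - 36 * x * e) / (36 * x * (1 - x))^2"
    using assms nz by (auto intro!: derivative_eq_intros simp: field_simps power2_eq_square)
  moreover have "- (36 * e * (1 - x) - 36 * x * e) / (36 * x * (1 - x))^2 = kappap x * e"
  proof -
    define X where "X = x^2 * (1 - x)^2"
    have Xp: "X > 0" unfolding X_def using assms by simp
    have "(36 * x * (1 - x))^2 = 36 * (36 * X)" unfolding X_def by (simp add: power2_eq_square algebra_simps)
    moreover have "- (36 * e * (1 - x) - 36 * x * e) / (36 * (36 * X)) = (2 * x - 1) * e / (36 * X)"
      using Xp by (simp add: field_simps)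
    ultimately show ?thesis unfolding kappap_def X_def by (simp add: mult.assoc)
  qed
  ultimately show ?thesis unfolding kappa_def by simp
qed

lemma DERIV_edge:
  fixes a b wa wb h :: real
  assumes "0 < a" "a < 1" "0 < b" "b < 1"
  shows "DERIV (\<lambda>s. (kappa (b + s * wb) + kappa (a + s * wa)) / 2 * (((b + s * wb) - (a + s * wa)) / h)^2) 0
     :> edge_val h a b wa wb"
proof -
  have k1: "DERIV (\<lambda>s. kappa (b + s * wb)) 0 :> kappap b * wb" by (rule DERIV_kappa[OF assms(3,4)])
  have k2: "DERIV (\<lambda>s. kappa (a + s * wa)) 0 :> kappap a * wa" by (rule DERIV_kappa[OF assms(1,2)])
  have q: "DERIV (\<lambda>s. (((b + s * wb) - (a + s * wa)) / h)^2) 0 :> 2 * ((b - a) / h) * ((wb - wa) / h)"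
    by (auto intro!: derivative_eq_intros simp: divide_inverse algebra_simps)
  have "DERIV (\<lambda>s. (kappa (b + s * wb) + kappa (a + s * wa)) / 2 * (((b + s * wb) - (a + s * wa)) / h)^2) 0
     :> (kappap b * wb + kappap a * wa) / 2 * (((b + 0 * wb) - (a + 0 * wa)) / h)^2
        + (2 * ((b - a) / h) * ((wb - wa) / h)) * ((kappa (b + 0 * wb) + kappa (a + 0 * wa)) / 2)"
    by (rule DERIV_mult[OF DERIV_cdivide[OF DERIV_add[OF k1 k2]] q])
  moreover have "(kappap b * wb + kappap a * wa) / 2 * (((b + 0 * wb) - (a + 0 * wa)) / h)^2
        + (2 * ((b - a) / h) * ((wb - wa) / h)) * ((kappa (b + 0 * wb) + kappa (a + 0 * wa)) / 2) = edge_val h a b wa wb"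
    unfolding edge_val_def by (simp only: mult_zero_left add_0_right add_0_left ac_simps)
  ultimately show ?thesis by simp
qed


lemma Dx_lin: "Dx h (\<lambda>a b. \<phi> a b + s * \<eta> a b - p a b) i j = Dx h (\<lambda>a b. \<phi> a b - p a b) i j + s * Dx h \<eta> i j"
  unfolding Dx_def by (simp add: divide_inverse algebra_simps)
lemma Dy_lin: "Dy h (\<lambda>a b. \<phi> a b + s * \<eta> a b - p a b) i j = Dy h (\<lambda>a b. \<phi> a b - p a b) i j + s * Dy h \<eta> i j"
  unfolding Dy_def by (simp add: divide_inverse algebra_simps)

context ctx
begin

definition "alp = 1 / tau N1 N2 + 1 / N1"
definition "Hc i j = Hp N1 N2 chi (2 * p i j - q i j)"
definition "fF \<phi> i j = (3 * \<phi> i j - 4 * p i j + q i j) / (2 * dt)"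
definition "ekx \<phi> i j = (kappa (\<phi> (i+1) j) + kappa (\<phi> i j)) / 2 * ((\<phi> (i+1) j - \<phi> i j) / h)^2"
definition "eky \<phi> i j = (kappa (\<phi> i (j+1)) + kappa (\<phi> i j)) / 2 * ((\<phi> i (j+1) - \<phi> i j) / h)^2"
definition "J1 \<phi> = tsum N (\<lambda>i j. Sfun alp (rho N1 N2) (\<phi> i j) + Hc i j * \<phi> i j + ekx \<phi> i j + eky \<phi> i j
    + A * dt / 2 * ((Dx h (\<lambda>a b. \<phi> a b - p a b) i j)^2 + (Dy h (\<lambda>a b. \<phi> a b - p a b) i j)^2))"
definition "J2 \<phi> = - (dt / 3) * tsum N (\<lambda>i j. fF \<phi> i j * Gop (fF \<phi>) i j)"
definition "JJ \<phi> = J1 \<phi> + J2 \<phi>"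
definition "Fm \<phi> = Fmu N1 N2 chi h dt A p q \<phi>"
definition "gradJ \<phi> i j = Fm \<phi> i j - Gop (fF \<phi>) i j"

lemma rgt1: "rho N1 N2 > 1" using rho_gt1 N1 N2 by simp
lemma alp_pos: "alp > 0" unfolding alp_def using tau_pos[OF N1 N2] N1 by (intro add_pos_pos) simp_all

lemma Sp_alt: "Sp N1 N2 x = alp * ln x - rho N1 N2 * ln (1 - rho N1 N2 * x)"
  unfolding Sp_def alp_def by simp

lemma range_facts:
  assumes "0 < x" "x < 1 / rho N1 N2"
  shows "0 < 1 - rho N1 N2 * x" "x < 1"
proof -
  have "rho N1 N2 * x < 1" using assms rgt1 by (simp add: field_simps)
  then show "0 < 1 - rho N1 N2 * x" by simp
  show "x < 1" using assms rgt1 by (smt (verit) divide_less_eq_1_pos)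
qed

lemma J1_deriv:
  assumes p\<phi>: "periodic N \<phi>" and r\<phi>: "\<And>i j. 0 < \<phi> i j \<and> \<phi> i j < 1 / rho N1 N2" and p\<eta>: "periodic N \<eta>"
  shows "DERIV (\<lambda>s. J1 (padd \<phi> s \<eta>)) 0 :> tsum N (\<lambda>i j. Fm \<phi> i j * \<eta> i j)"
proof -
  have pw: "DERIV (\<lambda>s. Sfun alp (rho N1 N2) (padd \<phi> s \<eta> i j) + Hc i j * padd \<phi> s \<eta> i j + ekx (padd \<phi> s \<eta>) i j + eky (padd \<phi> s \<eta>) i j
    + A * dt / 2 * ((Dx h (\<lambda>a b. padd \<phi> s \<eta> a b - p a b) i j)^2 + (Dy h (\<lambda>a b. padd \<phi> s \<eta> a b - p a b) i j)^2)) 0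
    :> Sp N1 N2 (\<phi> i j) * \<eta> i j + Hc i j * \<eta> i j + edge_val h (\<phi> i j) (\<phi> (i+1) j) (\<eta> i j) (\<eta> (i+1) j)
       + edge_val h (\<phi> i j) (\<phi> i (j+1)) (\<eta> i j) (\<eta> i (j+1))
       + A * dt * (Dx h (\<lambda>a b. \<phi> a b - p a b) i j * Dx h \<eta> i j + Dy h (\<lambda>a b. \<phi> a b - p a b) i j * Dy h \<eta> i j)" for i j
  proof -
    have rf: "0 < \<phi> a b" "\<phi> a b < 1" "0 < 1 - rho N1 N2 * \<phi> a b" for a b
      using r\<phi>[of a b] range_facts[of "\<phi> a b"] by auto
    have d1: "DERIV (\<lambda>s. Sfun alp (rho N1 N2) (padd \<phi> s \<eta> i j)) 0 :> Sp N1 N2 (\<phi> i j) * \<eta> i j"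
      unfolding padd_def Sp_alt by (rule DERIV_Sfun[OF rf(1,3)])
    have d2: "DERIV (\<lambda>s. Hc i j * padd \<phi> s \<eta> i j) 0 :> Hc i j * \<eta> i j"
      unfolding padd_def by (auto intro!: derivative_eq_intros)
    have d3: "DERIV (\<lambda>s. ekx (padd \<phi> s \<eta>) i j) 0 :> edge_val h (\<phi> i j) (\<phi> (i+1) j) (\<eta> i j) (\<eta> (i+1) j)"
      unfolding ekx_def padd_def by (rule DERIV_edge) (use rf in auto)
    have d4: "DERIV (\<lambda>s. eky (padd \<phi> s \<eta>) i j) 0 :> edge_val h (\<phi> i j) (\<phi> i (j+1)) (\<eta> i j) (\<eta> i (j+1))"
      unfolding eky_def padd_def by (rule DERIV_edge) (use rf in auto)
    have d5: "DERIV (\<lambda>s. A * dt / 2 * ((Dx h (\<lambda>a b. padd \<phi> s \<eta> a b - p a b) i j)^2 + (Dy h (\<lambda>a b. padd \<phi> s \<eta> a b - p a b) i j)^2)) 0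
       :> A * dt * (Dx h (\<lambda>a b. \<phi> a b - p a b) i j * Dx h \<eta> i j + Dy h (\<lambda>a b. \<phi> a b - p a b) i j * Dy h \<eta> i j)"
      unfolding padd_def Dx_lin Dy_lin by (auto intro!: derivative_eq_intros simp: algebra_simps)
    show ?thesis by (intro DERIV_add d1 d2 d3 d4 d5)
  qed
  have "DERIV (\<lambda>s. J1 (padd \<phi> s \<eta>)) 0 :> tsum N (\<lambda>i j. Sp N1 N2 (\<phi> i j) * \<eta> i j + Hc i j * \<eta> i j + edge_val h (\<phi> i j) (\<phi> (i+1) j) (\<eta> i j) (\<eta> (i+1) j)
       + edge_val h (\<phi> i j) (\<phi> i (j+1)) (\<eta> i j) (\<eta> i (j+1))
       + A * dt * (Dx h (\<lambda>a b. \<phi> a b - p a b) i j * Dx h \<eta> i j + Dy h (\<lambda>a b. \<phi> a b - p a b) i j * Dy h \<eta> i j))"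
    unfolding J1_def by (rule tsum_DERIV[OF pw])
  moreover have "tsum N (\<lambda>i j. Sp N1 N2 (\<phi> i j) * \<eta> i j + Hc i j * \<eta> i j + edge_val h (\<phi> i j) (\<phi> (i+1) j) (\<eta> i j) (\<eta> (i+1) j)
       + edge_val h (\<phi> i j) (\<phi> i (j+1)) (\<eta> i j) (\<eta> i (j+1))
       + A * dt * (Dx h (\<lambda>a b. \<phi> a b - p a b) i j * Dx h \<eta> i j + Dy h (\<lambda>a b. \<phi> a b - p a b) i j * Dy h \<eta> i j))
     = tsum N (\<lambda>i j. Fm \<phi> i j * \<eta> i j)"
  proof -
    have ppm: "periodic N (\<lambda>a b. \<phi> a b - p a b)" by (rule per_comp2[OF p\<phi> pp])
    have s3: "tsum N (\<lambda>i j. Dx h (\<lambda>a b. \<phi> a b - p a b) i j * Dx h \<eta> i j + Dy h (\<lambda>a b. \<phi> a b - p a b) i j * Dy h \<eta> i j)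
       = - tsum N (\<lambda>i j. \<eta> i j * lap h (\<lambda>a b. \<phi> a b - p a b) i j)"
      unfolding sbp_lap[OF p\<eta> ppm] by (simp add: mult.commute)
    have "tsum N (\<lambda>i j. Fm \<phi> i j * \<eta> i j) = tsum N (\<lambda>i j. Sp N1 N2 (\<phi> i j) * \<eta> i j) + tsum N (\<lambda>i j. Hc i j * \<eta> i j)
       + tsum N (\<lambda>i j. tx h \<phi> i j * \<eta> i j) + tsum N (\<lambda>i j. ty h \<phi> i j * \<eta> i j)
       - A * dt * tsum N (\<lambda>i j. \<eta> i j * lap h (\<lambda>a b. \<phi> a b - p a b) i j)"
      unfolding Fm_def Fmu_def Hc_def by (simp add: tsum_add tsum_diff tsum_cmult[symmetric] algebra_simps)
    also have "\<dots> = tsum N (\<lambda>i j. Sp N1 N2 (\<phi> i j) * \<eta> i j) + tsum N (\<lambda>i j. Hc i j * \<eta> i j)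
       + tsum N (\<lambda>i j. edge_val h (\<phi> i j) (\<phi> (i+1) j) (\<eta> i j) (\<eta> (i+1) j))
       + tsum N (\<lambda>i j. edge_val h (\<phi> i j) (\<phi> i (j+1)) (\<eta> i j) (\<eta> i (j+1)))
       + A * dt * tsum N (\<lambda>i j. Dx h (\<lambda>a b. \<phi> a b - p a b) i j * Dx h \<eta> i j + Dy h (\<lambda>a b. \<phi> a b - p a b) i j * Dy h \<eta> i j)"
      unfolding tx_sum[OF p\<phi> p\<eta>] ty_sum[OF p\<phi> p\<eta>] s3 by simp
    finally show ?thesis by (simp add: tsum_add tsum_cmult)
  qed
  ultimately show ?thesis by simp
qed

end


context ctx
begin

lemma per_fF: "periodic N \<phi> \<Longrightarrow> periodic N (fF \<phi>)"
  unfolding fF_def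
  by (rule periodicI) (simp_all add: perD1 perD2 pp pq)

lemma tsum_fF: "tsum N \<phi> = tsum N p \<Longrightarrow> tsum N (fF \<phi>) = 0"
  unfolding fF_def using mean by (simp add: tsum_divide tsum_add tsum_diff tsum_cmult)

lemma fF_padd: "fF (padd \<phi> s \<eta>) i j = fF \<phi> i j + s * (3 / (2 * dt) * \<eta> i j)"
  unfolding fF_def padd_def using dt by (simp add: field_simps)

lemma J2_deriv:
  assumes p\<phi>: "periodic N \<phi>" and m\<phi>: "tsum N \<phi> = tsum N p" and p\<eta>: "periodic N \<eta>" and m\<eta>: "tsum N \<eta> = 0"
  shows "DERIV (\<lambda>s. J2 (padd \<phi> s \<eta>)) 0 :> - tsum N (\<lambda>i j. \<eta> i j * Gop (fF \<phi>) i j)"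
proof -
  define \<beta> where "\<beta> = 3 / (2 * dt)"
  define f where "f = fF \<phi>"
  have e: "J2 (padd \<phi> s \<eta>) = - (dt / 3) * tsum N (\<lambda>i j. (f i j + s * (\<beta> * \<eta> i j)) *
       tsum N (\<lambda>k1 k2. (f k1 k2 + s * (\<beta> * \<eta> k1 k2)) * gr k1 k2 i j))" for s
    unfolding J2_def Gop_def fF_padd f_def \<beta>_def by simp
  have dG: "DERIV (\<lambda>s. tsum N (\<lambda>k1 k2. (f k1 k2 + s * (\<beta> * \<eta> k1 k2)) * gr k1 k2 i j)) 0
      :> tsum N (\<lambda>k1 k2. \<beta> * \<eta> k1 k2 * gr k1 k2 i j)" for i j
    by (rule tsum_DERIV) (auto intro!: derivative_eq_intros)
  have dP: "DERIV (\<lambda>s. (f i j + s * (\<beta> * \<eta> i j)) * tsum N (\<lambda>k1 k2. (f k1 k2 + s * (\<beta> * \<eta> k1 k2)) * gr k1 k2 i j)) 0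
      :> \<beta> * \<eta> i j * Gop f i j + f i j * (\<beta> * Gop \<eta> i j)" for i j
  proof -
    have a: "DERIV (\<lambda>s. f i j + s * (\<beta> * \<eta> i j)) 0 :> \<beta> * \<eta> i j" by (auto intro!: derivative_eq_intros)
    have "DERIV (\<lambda>s. (f i j + s * (\<beta> * \<eta> i j)) * tsum N (\<lambda>k1 k2. (f k1 k2 + s * (\<beta> * \<eta> k1 k2)) * gr k1 k2 i j)) 0
      :> \<beta> * \<eta> i j * tsum N (\<lambda>k1 k2. (f k1 k2 + 0 * (\<beta> * \<eta> k1 k2)) * gr k1 k2 i j)
         + tsum N (\<lambda>k1 k2. \<beta> * \<eta> k1 k2 * gr k1 k2 i j) * (f i j + 0 * (\<beta> * \<eta> i j))"
      by (rule DERIV_mult[OF a dG])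
    moreover have "tsum N (\<lambda>k1 k2. \<beta> * \<eta> k1 k2 * gr k1 k2 i j) = \<beta> * Gop \<eta> i j"
      unfolding Gop_def by (simp add: tsum_cmult[symmetric] mult.assoc)
    ultimately show ?thesis unfolding Gop_def by (simp add: mult.commute)
  qed
  define S where "S = tsum N (\<lambda>i j. \<eta> i j * Gop f i j)"
  have D0: "DERIV (\<lambda>s. J2 (padd \<phi> s \<eta>)) 0 :> - (dt / 3) * tsum N (\<lambda>i j. \<beta> * \<eta> i j * Gop f i j + f i j * (\<beta> * Gop \<eta> i j))"
    unfolding e by (intro DERIV_cmult tsum_DERIV dP)
  have sy: "tsum N (\<lambda>i j. f i j * Gop \<eta> i j) = S"
    unfolding f_def S_def by (rule Gop_sym[OF per_fF[OF p\<phi>] p\<eta> tsum_fF[OF m\<phi>] m\<eta>])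
  have "tsum N (\<lambda>i j. \<beta> * \<eta> i j * Gop f i j + f i j * (\<beta> * Gop \<eta> i j))
      = \<beta> * tsum N (\<lambda>i j. \<eta> i j * Gop f i j) + \<beta> * tsum N (\<lambda>i j. f i j * Gop \<eta> i j)"
    by (simp add: tsum_add tsum_cmult[symmetric] algebra_simps)
  also have "\<dots> = 2 * \<beta> * S" unfolding sy S_def by simp
  finally have t: "tsum N (\<lambda>i j. \<beta> * \<eta> i j * Gop f i j + f i j * (\<beta> * Gop \<eta> i j)) = 2 * \<beta> * S" .
  have D1: "DERIV (\<lambda>s. J2 (padd \<phi> s \<eta>)) 0 :> - (dt / 3) * (2 * \<beta> * S)" using D0[unfolded t] .
  have eq: "- (dt / 3) * (2 * \<beta> * S) = - S" unfolding \<beta>_def using dt by (simp add: field_simps)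
  show ?thesis using D1[unfolded eq] unfolding S_def f_def .
qed

lemma JJ_deriv:
  assumes p\<phi>: "periodic N \<phi>" and r\<phi>: "\<And>i j. 0 < \<phi> i j \<and> \<phi> i j < 1 / rho N1 N2" and m\<phi>: "tsum N \<phi> = tsum N p"
    and p\<eta>: "periodic N \<eta>" and m\<eta>: "tsum N \<eta> = 0"
  shows "DERIV (\<lambda>s. JJ (padd \<phi> s \<eta>)) 0 :> tsum N (\<lambda>i j. gradJ \<phi> i j * \<eta> i j)"
proof -
  have "DERIV (\<lambda>s. JJ (padd \<phi> s \<eta>)) 0 :> tsum N (\<lambda>i j. Fm \<phi> i j * \<eta> i j) + - tsum N (\<lambda>i j. \<eta> i j * Gop (fF \<phi>) i j)"
    unfolding JJ_def by (intro DERIV_add J1_deriv J2_deriv assms)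
  moreover have "tsum N (\<lambda>i j. Fm \<phi> i j * \<eta> i j) + - tsum N (\<lambda>i j. \<eta> i j * Gop (fF \<phi>) i j)
     = tsum N (\<lambda>i j. gradJ \<phi> i j * \<eta> i j)"
    unfolding gradJ_def left_diff_distrib tsum_diff by (simp add: mult.commute)
  ultimately show ?thesis by simp
qed

end



lemma kappap_le:
  fixes x c :: real
  assumes "0 < x" "x < c" "c < 1"
  shows "kappap x \<le> 1 / (9 * (1 - c)^2)"
proof (cases "2 * x - 1 \<le> 0")
  case True
  have "36 * x^2 * (1 - x)^2 > 0" using assms by simp
  then have "kappap x \<le> 0" unfolding kappap_def using True by (simp add: divide_nonpos_pos)
  also have "0 \<le> 1 / (9 * (1 - c)^2)" by simp
  finally show ?thesis .
next
  case False
  then have x2: "x > 1/2" by simp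
  have c1: "0 < 1 - c" "1 - c < 1 - x" using assms by auto
  have "(1/2::real)^2 \<le> x^2" using x2 by (intro power_mono) auto
  then have a: "x^2 \<ge> 1/4" by (simp add: power2_eq_square)
  have b: "(1 - x)^2 \<ge> (1 - c)^2" using c1 by (simp add: power_mono)
  have "9 * (1 - c)^2 \<le> 36 * x^2 * (1 - x)^2"
  proof -
    have "9 * (1 - c)^2 = 36 * (1/4) * (1 - c)^2" by simp
    also have "\<dots> \<le> 36 * x^2 * (1 - x)^2" using a b by (intro mult_mono) auto
    finally show ?thesis .
  qed
  moreover have "9 * (1 - c)^2 > 0" using c1 by simp
  moreover have "2 * x - 1 \<le> 1" using assms by simp
  ultimately have "(2 * x - 1) / (36 * x^2 * (1 - x)^2) \<le> 1 / (9 * (1 - c)^2)"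
    using False by (intro frac_le) auto
  then show ?thesis unfolding kappap_def .
qed

lemma kappap_ge:
  fixes x c m :: real
  assumes "0 < m" "m \<le> x" "x < c" "c < 1"
  shows "- (1 / (36 * m^2 * (1 - c)^2)) \<le> kappap x"
proof -
  have c1: "0 < 1 - c" "1 - c < 1 - x" using assms by auto
  have a: "m^2 \<le> x^2" using assms by (simp add: power_mono)
  have b: "(1 - c)^2 \<le> (1 - x)^2" using c1 by (simp add: power_mono)
  have den: "36 * m^2 * (1 - c)^2 \<le> 36 * x^2 * (1 - x)^2"
    using a b by (intro mult_mono) auto
  have dp: "0 < 36 * m^2 * (1 - c)^2" using assms c1 by simp
  have "1 / (36 * x^2 * (1 - x)^2) \<le> 1 / (36 * m^2 * (1 - c)^2)"
    using frac_le[of 1 1 "36 * m^2 * (1 - c)^2" "36 * x^2 * (1 - x)^2"] den dp by simp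
  moreover have "- (1 / (36 * x^2 * (1 - x)^2)) \<le> (2 * x - 1) / (36 * x^2 * (1 - x)^2)"
  proof -
    have "0 < 36 * x^2 * (1 - x)^2" using dp den by linarith
    moreover have "-1 \<le> 2 * x - 1" using assms by simp
    ultimately have "(-1) / (36 * x^2 * (1 - x)^2) \<le> (2 * x - 1) / (36 * x^2 * (1 - x)^2)"
      by (intro divide_right_mono) auto
    then show ?thesis by simp
  qed
  ultimately show ?thesis unfolding kappap_def by linarith
qed


lemma kappa_pos: "0 < x \<Longrightarrow> x < 1 \<Longrightarrow> 0 < kappa x"
  unfolding kappa_def by simp

lemma sq_diff_le:
  fixes a b c h :: real
  assumes "0 < a" "a < c" "0 < b" "b < c" "h > 0"
  shows "((b - a) / h)^2 \<le> c^2 / h^2"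
proof -
  have "\<bar>b - a\<bar> \<le> c" using assms by auto
  then have "\<bar>b - a\<bar>^2 \<le> c^2" by (intro power_mono) auto
  then have "(b - a)^2 \<le> c^2" by simp
  then show ?thesis unfolding power_divide using assms by (intro divide_right_mono) auto
qed

lemma dx_min_nonneg:
  fixes k0 k1 k2 a0 a1 a2 h :: real
  assumes "0 < k0" "0 < k1" "0 < k2" "a1 \<le> a0" "a1 \<le> a2" "h > 0"
  shows "0 \<le> ((k2 + k1) / 2 * ((a2 - a1) / h) - (k1 + k0) / 2 * ((a1 - a0) / h)) / h"
proof -
  have x: "0 \<le> (k2 + k1) / 2 * ((a2 - a1) / h)" using assms by (intro mult_nonneg_nonneg) auto
  have y: "(k1 + k0) / 2 * ((a1 - a0) / h) \<le> 0" using assms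
    by (intro mult_nonneg_nonpos) (auto simp: divide_nonpos_pos)
  have "0 \<le> (k2 + k1) / 2 * ((a2 - a1) / h) - (k1 + k0) / 2 * ((a1 - a0) / h)" using x y by linarith
  then show ?thesis using assms by (intro divide_nonneg_pos) auto
qed

lemma dx_max_nonpos:
  fixes k0 k1 k2 a0 a1 a2 h :: real
  assumes "0 < k0" "0 < k1" "0 < k2" "a0 \<le> a1" "a2 \<le> a1" "h > 0"
  shows "((k2 + k1) / 2 * ((a2 - a1) / h) - (k1 + k0) / 2 * ((a1 - a0) / h)) / h \<le> 0"
proof -
  have x: "(k2 + k1) / 2 * ((a2 - a1) / h) \<le> 0" using assms
    by (intro mult_nonneg_nonpos) (auto simp: divide_nonpos_pos)
  have y: "0 \<le> (k1 + k0) / 2 * ((a1 - a0) / h)" using assms by (intro mult_nonneg_nonneg) auto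
  have "(k2 + k1) / 2 * ((a2 - a1) / h) - (k1 + k0) / 2 * ((a1 - a0) / h) \<le> 0" using x y by linarith
  then show ?thesis using assms by (intro divide_nonpos_pos) auto
qed

context ctx
begin

definition "Dm = (1 / rho N1 N2)^2 / h^2"
definition "Ku = 1 / (9 * (1 - 1 / rho N1 N2)^2)"

lemma c_facts: "0 < 1 / rho N1 N2" "1 / rho N1 N2 < 1"
  using rgt1 by auto

lemma Dm_nonneg: "0 \<le> Dm" unfolding Dm_def by simp
lemma Ku_nonneg: "0 \<le> Ku" unfolding Ku_def by simp

lemma tx_min:
  assumes r\<phi>: "\<And>i j. 0 < \<phi> i j \<and> \<phi> i j < 1 / rho N1 N2" and mn: "\<And>x y. \<phi> u1 u2 \<le> \<phi> x y"
  shows "tx h \<phi> u1 u2 \<le> 2 * Ku * Dm" and "ty h \<phi> u1 u2 \<le> 2 * Ku * Dm"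
proof -
  have rf: "0 < \<phi> a b" "\<phi> a b < 1" for a b using r\<phi>[of a b] c_facts(2) by linarith+
  have sq: "((\<phi> a' b' - \<phi> a b) / h)^2 \<le> Dm" for a b a' b'
    unfolding Dm_def by (rule sq_diff_le) (use r\<phi> h in auto)
  have kp: "kappap (\<phi> u1 u2) \<le> Ku" unfolding Ku_def by (rule kappap_le) (use r\<phi> c_facts in auto)
  have key: "kappap (\<phi> u1 u2) * X \<le> 2 * Ku * Dm" if "0 \<le> X" "X \<le> 2 * Dm" for X
  proof -
    have "kappap (\<phi> u1 u2) * X \<le> Ku * X" using kp that by (intro mult_right_mono) auto
    also have "\<dots> \<le> Ku * (2 * Dm)" using that Ku_nonneg by (intro mult_left_mono) auto
    finally show ?thesis by simp
  qed
  have ax1: "0 \<le> ax (\<lambda>a b. (Dx h \<phi> a b)^2) u1 u2" "ax (\<lambda>a b. (Dx h \<phi> a b)^2) u1 u2 \<le> 2 * Dm"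
  proof -
    show "0 \<le> ax (\<lambda>a b. (Dx h \<phi> a b)^2) u1 u2" unfolding ax_def by simp
    show "ax (\<lambda>a b. (Dx h \<phi> a b)^2) u1 u2 \<le> 2 * Dm"
      unfolding ax_def Dx_def using sq[of "u1+1" u2 u1 u2] sq[of u1 u2 "u1 - 1" u2] Dm_nonneg by simp
  qed
  have ay1: "0 \<le> ay (\<lambda>a b. (Dy h \<phi> a b)^2) u1 u2" "ay (\<lambda>a b. (Dy h \<phi> a b)^2) u1 u2 \<le> 2 * Dm"
  proof -
    show "0 \<le> ay (\<lambda>a b. (Dy h \<phi> a b)^2) u1 u2" unfolding ay_def by simp
    show "ay (\<lambda>a b. (Dy h \<phi> a b)^2) u1 u2 \<le> 2 * Dm"
      unfolding ay_def Dy_def using sq[of u1 "u2+1" u1 u2] sq[of u1 u2 u1 "u2 - 1"] Dm_nonneg by simp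
  qed
  have dx0: "0 \<le> dx h (\<lambda>a b. Ax (\<lambda>c d. kappa (\<phi> c d)) a b * Dx h \<phi> a b) u1 u2"
    unfolding dx_def Ax_def Dx_def diff_add_cancel by (rule dx_min_nonneg) (use kappa_pos rf mn h in auto)
  have dy0: "0 \<le> dy h (\<lambda>a b. Ay (\<lambda>c d. kappa (\<phi> c d)) a b * Dy h \<phi> a b) u1 u2"
    unfolding dy_def Ay_def Dy_def diff_add_cancel by (rule dx_min_nonneg) (use kappa_pos rf mn h in auto)
  show "tx h \<phi> u1 u2 \<le> 2 * Ku * Dm" unfolding tx_def using key[OF ax1] dx0 by simp
  show "ty h \<phi> u1 u2 \<le> 2 * Ku * Dm" unfolding ty_def using key[OF ay1] dy0 by simp
qed

end


context ctx
begin

definition "mm = tsum N p / (real N)^2"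
definition "Kl = 1 / (36 * mm^2 * (1 - 1 / rho N1 N2)^2)"

lemma Kl_nonneg: "0 \<le> Kl" unfolding Kl_def by simp

lemma tsum_le_const: "(\<And>i j. i \<in> {1..int N} \<Longrightarrow> j \<in> {1..int N} \<Longrightarrow> f i j \<le> c) \<Longrightarrow> tsum N f \<le> real N * real N * c"
  using tsum_mono[of N f "\<lambda>i j. c"] by (simp add: tsum_const)
lemma tsum_ge_const: "(\<And>i j. i \<in> {1..int N} \<Longrightarrow> j \<in> {1..int N} \<Longrightarrow> c \<le> f i j) \<Longrightarrow> real N * real N * c \<le> tsum N f"
  using tsum_mono[of N "\<lambda>i j. c" f] by (simp add: tsum_const)

lemma mm_range: "0 < mm" "mm < 1 / rho N1 N2"
proof -
  have one: "1 \<in> {1..int N}" using N by simp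
  have Np: "(real N)^2 > 0" using N by simp
  have "0 < p 1 1" using prange by simp
  also have "p 1 1 \<le> tsum N p" by (rule tsum_single[OF _ one one]) (use prange less_imp_le in auto)
  finally show "0 < mm" unfolding mm_def using Np by simp
  have "0 < 1 / rho N1 N2 - p 1 1" using prange by simp
  also have "1 / rho N1 N2 - p 1 1 \<le> tsum N (\<lambda>i j. 1 / rho N1 N2 - p i j)"
    by (rule tsum_single[OF _ one one]) (use prange less_imp_le in auto)
  finally have "tsum N p < real N * real N * (1 / rho N1 N2)" by (simp add: tsum_diff tsum_const)
  then show "mm < 1 / rho N1 N2" unfolding mm_def using Np by (simp add: power2_eq_square divide_less_eq mult.commute)
qed

lemma tx_max:
  assumes r\<phi>: "\<And>i j. 0 < \<phi> i j \<and> \<phi> i j < 1 / rho N1 N2" and mx: "\<And>x y. \<phi> x y \<le> \<phi> v1 v2" and vm: "mm \<le> \<phi> v1 v2"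
  shows "- (2 * Kl * Dm) \<le> tx h \<phi> v1 v2" and "- (2 * Kl * Dm) \<le> ty h \<phi> v1 v2"
proof -
  have rf: "0 < \<phi> a b" "\<phi> a b < 1" for a b using r\<phi>[of a b] c_facts(2) by linarith+
  have sq: "((\<phi> a' b' - \<phi> a b) / h)^2 \<le> Dm" for a b a' b'
    unfolding Dm_def by (rule sq_diff_le) (use r\<phi> h in auto)
  have kp: "- Kl \<le> kappap (\<phi> v1 v2)" unfolding Kl_def by (rule kappap_ge) (use r\<phi> c_facts mm_range vm in auto)
  have key: "- (2 * Kl * Dm) \<le> kappap (\<phi> v1 v2) * X" if "0 \<le> X" "X \<le> 2 * Dm" for X
  proof -
    have "Kl * X \<le> Kl * (2 * Dm)" using that Kl_nonneg by (intro mult_left_mono) auto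
    moreover have "- Kl * X \<le> kappap (\<phi> v1 v2) * X" using kp that by (intro mult_right_mono) auto
    ultimately show ?thesis by simp
  qed
  have ax1: "0 \<le> ax (\<lambda>a b. (Dx h \<phi> a b)^2) v1 v2" "ax (\<lambda>a b. (Dx h \<phi> a b)^2) v1 v2 \<le> 2 * Dm"
  proof -
    show "0 \<le> ax (\<lambda>a b. (Dx h \<phi> a b)^2) v1 v2" unfolding ax_def by simp
    show "ax (\<lambda>a b. (Dx h \<phi> a b)^2) v1 v2 \<le> 2 * Dm"
      unfolding ax_def Dx_def using sq[of "v1+1" v2 v1 v2] sq[of v1 v2 "v1 - 1" v2] Dm_nonneg by simp
  qed
  have ay1: "0 \<le> ay (\<lambda>a b. (Dy h \<phi> a b)^2) v1 v2" "ay (\<lambda>a b. (Dy h \<phi> a b)^2) v1 v2 \<le> 2 * Dm"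
  proof -
    show "0 \<le> ay (\<lambda>a b. (Dy h \<phi> a b)^2) v1 v2" unfolding ay_def by simp
    show "ay (\<lambda>a b. (Dy h \<phi> a b)^2) v1 v2 \<le> 2 * Dm"
      unfolding ay_def Dy_def using sq[of v1 "v2+1" v1 v2] sq[of v1 v2 v1 "v2 - 1"] Dm_nonneg by simp
  qed
  have dx0: "dx h (\<lambda>a b. Ax (\<lambda>c d. kappa (\<phi> c d)) a b * Dx h \<phi> a b) v1 v2 \<le> 0"
    unfolding dx_def Ax_def Dx_def diff_add_cancel by (rule dx_max_nonpos) (use kappa_pos rf mx h in auto)
  have dy0: "dy h (\<lambda>a b. Ay (\<lambda>c d. kappa (\<phi> c d)) a b * Dy h \<phi> a b) v1 v2 \<le> 0"
    unfolding dy_def Ay_def Dy_def diff_add_cancel by (rule dx_max_nonpos) (use kappa_pos rf mx h in auto)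
  show "- (2 * Kl * Dm) \<le> tx h \<phi> v1 v2" unfolding tx_def using key[OF ax1] dx0 by simp
  show "- (2 * Kl * Dm) \<le> ty h \<phi> v1 v2" unfolding ty_def using key[OF ay1] dy0 by simp
qed

lemma lap_min:
  assumes mn: "\<And>x y. \<phi> u1 u2 \<le> \<phi> x y" shows "0 \<le> lap h \<phi> u1 u2"
proof -
  have "0 \<le> \<phi> (u1+1) u2 + \<phi> (u1 - 1) u2 + \<phi> u1 (u2+1) + \<phi> u1 (u2 - 1) - 4 * \<phi> u1 u2"
    using mn[of "u1+1" u2] mn[of "u1 - 1" u2] mn[of u1 "u2+1"] mn[of u1 "u2 - 1"] by linarith
  then show ?thesis unfolding lap_expand using h by (intro divide_nonneg_pos) auto
qed
lemma lap_max:
  assumes mx: "\<And>x y. \<phi> x y \<le> \<phi> v1 v2" shows "lap h \<phi> v1 v2 \<le> 0"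
proof -
  have "\<phi> (v1+1) v2 + \<phi> (v1 - 1) v2 + \<phi> v1 (v2+1) + \<phi> v1 (v2 - 1) - 4 * \<phi> v1 v2 \<le> 0"
    using mx[of "v1+1" v2] mx[of "v1 - 1" v2] mx[of v1 "v2+1"] mx[of v1 "v2 - 1"] by linarith
  then show ?thesis unfolding lap_expand using h by (intro divide_nonpos_pos) auto
qed

end


context ctx
begin

definition "Lp = tsum N (\<lambda>i j. \<bar>lap h p i j\<bar>)"
definition "Hb = tsum N (\<lambda>i j. \<bar>Hc i j\<bar>)"
definition "Fb = 2 / (rho N1 N2 * dt)"
definition "Gs = tsum N (\<lambda>x y. tsum N (\<lambda>k1 k2. \<bar>gr k1 k2 x y\<bar>))"
definition "C1 = 4 * Ku * Dm + 4 * Kl * Dm + 2 * Hb + 2 * A * dt * Lp + 2 * Fb * Gs"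

lemma abs_le_tsum:
  "i \<in> {1..int N} \<Longrightarrow> j \<in> {1..int N} \<Longrightarrow> \<bar>f i j\<bar> \<le> tsum N (\<lambda>i j. \<bar>f i j\<bar>)"
  by (rule tsum_single[of N "\<lambda>i j. \<bar>f i j\<bar>"]) auto

lemma fF_bound:
  assumes "\<And>i j. 0 < \<phi> i j \<and> \<phi> i j < 1 / rho N1 N2"
  shows "\<bar>fF \<phi> i j\<bar> \<le> Fb"
proof -
  have a: "\<bar>3 * \<phi> i j - 4 * p i j + q i j\<bar> \<le> 4 / rho N1 N2"
    using assms[of i j] prange[of i j] qrange[of i j] by (simp add: abs_le_iff)
  have "\<bar>fF \<phi> i j\<bar> = \<bar>3 * \<phi> i j - 4 * p i j + q i j\<bar> / (2 * dt)" unfolding fF_def using dt by (simp add: abs_divide)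
  also have "\<dots> \<le> (4 / rho N1 N2) / (2 * dt)" using a dt by (intro divide_right_mono) auto
  also have "\<dots> = Fb" unfolding Fb_def by simp
  finally show ?thesis .
qed

lemma Gop_bound:
  assumes "\<And>i j. \<bar>v i j\<bar> \<le> Fb" "x \<in> {1..int N}" "y \<in> {1..int N}"
  shows "\<bar>Gop v x y\<bar> \<le> Fb * Gs"
proof -
  have "\<bar>Gop v x y\<bar> \<le> tsum N (\<lambda>k1 k2. \<bar>v k1 k2 * gr k1 k2 x y\<bar>)" unfolding Gop_def by (rule tsum_abs)
  also have "\<dots> \<le> tsum N (\<lambda>k1 k2. Fb * \<bar>gr k1 k2 x y\<bar>)"
    by (rule tsum_mono) (use assms(1) in \<open>auto simp: abs_mult intro: mult_right_mono\<close>)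
  also have "\<dots> = Fb * tsum N (\<lambda>k1 k2. \<bar>gr k1 k2 x y\<bar>)" by (rule tsum_cmult)
  also have "\<dots> \<le> Fb * Gs"
  proof -
    have "0 \<le> Fb" unfolding Fb_def using rgt1 dt by simp
    moreover have "tsum N (\<lambda>k1 k2. \<bar>gr k1 k2 x y\<bar>) \<le> Gs"
      unfolding Gs_def by (rule tsum_single[OF _ assms(2,3)]) (auto intro: tsum_nonneg)
    ultimately show ?thesis by (intro mult_left_mono)
  qed
  finally show ?thesis .
qed

lemma grad_diff:
  assumes r\<phi>: "\<And>i j. 0 < \<phi> i j \<and> \<phi> i j < 1 / rho N1 N2"
    and u: "u1 \<in> {1..int N}" "u2 \<in> {1..int N}" and v: "v1 \<in> {1..int N}" "v2 \<in> {1..int N}"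
    and mn: "\<And>x y. \<phi> u1 u2 \<le> \<phi> x y" and mx: "\<And>x y. \<phi> x y \<le> \<phi> v1 v2" and vm: "mm \<le> \<phi> v1 v2"
  shows "gradJ \<phi> u1 u2 - gradJ \<phi> v1 v2 \<le> Sp N1 N2 (\<phi> u1 u2) - Sp N1 N2 (\<phi> v1 v2) + C1"
proof -
  have g: "gradJ \<phi> i j = Sp N1 N2 (\<phi> i j) + tx h \<phi> i j + ty h \<phi> i j + Hc i j
      - A * dt * lap h \<phi> i j + A * dt * lap h p i j - Gop (fF \<phi>) i j" for i j
    unfolding gradJ_def Fm_def Fmu_def Hc_def lap_diff by (simp add: algebra_simps)
  have t1: "tx h \<phi> u1 u2 \<le> 2 * Ku * Dm" "ty h \<phi> u1 u2 \<le> 2 * Ku * Dm" using tx_min[of \<phi> u1 u2] r\<phi> mn by blast+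
  have t2: "- (2 * Kl * Dm) \<le> tx h \<phi> v1 v2" "- (2 * Kl * Dm) \<le> ty h \<phi> v1 v2" using tx_max[of \<phi> v1 v2] r\<phi> mx vm by blast+
  have h1: "\<bar>Hc u1 u2\<bar> \<le> Hb" "\<bar>Hc v1 v2\<bar> \<le> Hb" unfolding Hb_def by (rule abs_le_tsum, fact+)+
  have l1: "\<bar>lap h p u1 u2\<bar> \<le> Lp" "\<bar>lap h p v1 v2\<bar> \<le> Lp" unfolding Lp_def by (rule abs_le_tsum, fact+)+
  have Adt: "0 < A * dt" using A dt by simp
  have l2: "0 \<le> A * dt * lap h \<phi> u1 u2" using Adt lap_min[of \<phi> u1 u2, OF mn] by simp
  have l3: "A * dt * lap h \<phi> v1 v2 \<le> 0" using Adt lap_max[of \<phi> v1 v2, OF mx] by (simp add: mult_nonneg_nonpos)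
  have l4: "A * dt * lap h p u1 u2 \<le> A * dt * Lp" "- (A * dt * lap h p v1 v2) \<le> A * dt * Lp"
  proof -
    have "A * dt * lap h p u1 u2 \<le> A * dt * Lp" using l1 Adt by (intro mult_left_mono) (auto simp: abs_le_iff)
    moreover have "A * dt * (- lap h p v1 v2) \<le> A * dt * Lp" using l1 Adt by (intro mult_left_mono) (auto simp: abs_le_iff)
    ultimately show "A * dt * lap h p u1 u2 \<le> A * dt * Lp" "- (A * dt * lap h p v1 v2) \<le> A * dt * Lp" by simp_all
  qed
  have fb: "\<bar>fF \<phi> i j\<bar> \<le> Fb" for i j by (rule fF_bound[OF r\<phi>])
  have g1: "\<bar>Gop (fF \<phi>) u1 u2\<bar> \<le> Fb * Gs" "\<bar>Gop (fF \<phi>) v1 v2\<bar> \<le> Fb * Gs"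
    by (rule Gop_bound[OF fb], fact+)+
  show ?thesis unfolding g C1_def using t1 t2 h1 l2 l3 l4 g1 by (simp add: abs_le_iff)
qed

end


context ctx
begin

lemma delta_exists:
  "\<exists>\<delta>>0. \<delta> < mm \<and> mm < 1 / rho N1 N2 - \<delta> \<and> Sp N1 N2 \<delta> < Sp N1 N2 mm - C1 \<and> Sp N1 N2 mm + C1 < Sp N1 N2 (1 / rho N1 N2 - \<delta>)"
proof -
  define r where "r = rho N1 N2"
  have r1: "r > 1" unfolding r_def by (rule rgt1)
  have al: "alp > 0" by (rule alp_pos)
  have mr: "0 < mm" "mm < 1 / r" using mm_range unfolding r_def by auto
  define e1 where "e1 = exp ((Sp N1 N2 mm - C1 - r * ln 2 - 1) / alp)"
  define e2 where "e2 = exp (- (Sp N1 N2 mm + C1 - alp * ln mm + 1) / r) / r"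
  define \<delta> where "\<delta> = min (min (mm / 2) ((1 / r - mm) / 2)) (min (1 / (2 * r)) (min e1 e2))"
  have e1p: "e1 > 0" unfolding e1_def by simp
  have e2p: "e2 > 0" unfolding e2_def using r1 by simp
  have dp: "\<delta> > 0" unfolding \<delta>_def using mr e1p e2p r1 by auto
  have "\<delta> \<le> mm / 2" unfolding \<delta>_def by (simp only: min.coboundedI1 min.cobounded1)
  then have d1: "\<delta> < mm" using mr by (simp add: field_simps)
  have "\<delta> \<le> (1 / r - mm) / 2" unfolding \<delta>_def by (simp only: min.coboundedI1 min.cobounded2)
  then have d2: "mm < 1 / r - \<delta>" using mr by (simp add: field_simps)
  have d3: "\<delta> \<le> 1 / (2 * r)" unfolding \<delta>_def by (simp only: min.coboundedI2 min.cobounded1)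
  have d4: "\<delta> \<le> e1" "\<delta> \<le> e2" unfolding \<delta>_def
    by (simp only: min.coboundedI2 min.cobounded1 min.cobounded2)+
  have lowS: "Sp N1 N2 \<delta> < Sp N1 N2 mm - C1"
  proof -
    have "r * \<delta> \<le> 1 / 2" using d3 r1 by (simp add: field_simps)
    then have h2: "1 / 2 \<le> 1 - r * \<delta>" by simp
    then have "ln (1 / 2) \<le> ln (1 - r * \<delta>)" by (subst ln_le_cancel_iff) auto
    then have "- ln 2 \<le> ln (1 - r * \<delta>)" by (simp add: ln_div)
    then have "r * (- ln (1 - r * \<delta>)) \<le> r * ln 2" using r1 by (intro mult_left_mono) auto
    then have a: "- r * ln (1 - r * \<delta>) \<le> r * ln 2" by simp
    have "ln \<delta> \<le> ln e1" using d4 dp by (subst ln_le_cancel_iff) auto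
    then have "ln \<delta> \<le> (Sp N1 N2 mm - C1 - r * ln 2 - 1) / alp" unfolding e1_def by simp
    then have b: "alp * ln \<delta> \<le> Sp N1 N2 mm - C1 - r * ln 2 - 1" using al by (simp add: field_simps)
    have "Sp N1 N2 \<delta> = alp * ln \<delta> - r * ln (1 - r * \<delta>)" unfolding Sp_alt r_def ..
    then show ?thesis using a b by linarith
  qed
  have upS: "Sp N1 N2 mm + C1 < Sp N1 N2 (1 / r - \<delta>)"
  proof -
    have rd: "1 - r * (1 / r - \<delta>) = r * \<delta>" using r1 by (simp add: field_simps)
    have "ln (r * \<delta>) \<le> ln (r * e2)" using d4 dp r1 by (subst ln_le_cancel_iff) auto
    also have "r * e2 = exp (- (Sp N1 N2 mm + C1 - alp * ln mm + 1) / r)" unfolding e2_def using r1 by simp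
    finally have "ln (r * \<delta>) \<le> - (Sp N1 N2 mm + C1 - alp * ln mm + 1) / r" by simp
    then have a: "Sp N1 N2 mm + C1 - alp * ln mm + 1 \<le> - r * ln (r * \<delta>)" using r1 by (simp add: field_simps)
    have "ln mm \<le> ln (1 / r - \<delta>)" using d2 mr by (subst ln_le_cancel_iff) auto
    then have b: "alp * ln mm \<le> alp * ln (1 / r - \<delta>)" using al by simp
    have "Sp N1 N2 (1 / r - \<delta>) = alp * ln (1 / r - \<delta>) - r * ln (r * \<delta>)" unfolding Sp_alt r_def[symmetric] rd ..
    then show ?thesis using a b by linarith
  qed
  show ?thesis using dp d1 d2 lowS upS unfolding r_def by blast
qed

definition "Kd \<delta> = {\<phi>::gridfun. \<forall>i j. \<delta> \<le> \<phi> i j \<and> \<phi> i j \<le> 1 / rho N1 N2 - \<delta>} \<inter> {\<phi>. periodic N \<phi>} \<inter> {\<phi>. tsum N \<phi> = tsum N p}"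

lemma Kd_compact: "compact (Kd \<delta>)"
  unfolding Kd_def by (intro compact_Int_closed closed_per closed_tsum_eq compact_box)

lemma Kd_vals:
  assumes "\<phi> \<in> Kd \<delta>" "\<delta> > 0"
  shows "\<phi> i j \<noteq> 0" "1 - rho N1 N2 * \<phi> i j \<noteq> 0" "36 * \<phi> i j * (1 - \<phi> i j) \<noteq> 0"
proof -
  have a: "\<delta> \<le> \<phi> i j" "\<phi> i j \<le> 1 / rho N1 N2 - \<delta>" using assms unfolding Kd_def by auto
  have r: "0 < 0 + \<phi> i j" "\<phi> i j < 1 / rho N1 N2" using a assms by auto
  show "\<phi> i j \<noteq> 0" using r by simp
  show "1 - rho N1 N2 * \<phi> i j \<noteq> 0" using range_facts[of "\<phi> i j"] r by simp
  show "36 * \<phi> i j * (1 - \<phi> i j) \<noteq> 0" using range_facts[of "\<phi> i j"] r by simp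
qed

lemma JJ_cont:
  assumes "\<delta> > 0"
  shows "continuous_on (Kd \<delta>) JJ"
proof -
  have v: "\<forall>\<phi>\<in>Kd \<delta>. \<phi> i j \<noteq> 0" "\<forall>\<phi>\<in>Kd \<delta>. 1 - rho N1 N2 * \<phi> i j \<noteq> 0" "\<forall>\<phi>\<in>Kd \<delta>. 36 * \<phi> i j * (1 - \<phi> i j) \<noteq> 0" for i j
    using Kd_vals[OF _ assms] by auto
  have hh: "h \<noteq> 0" "dt \<noteq> 0" using h dt by auto
  show ?thesis
    unfolding JJ_def[abs_def] J1_def J2_def Sfun_def ekx_def eky_def kappa_def Dx_def Dy_def fF_def Gop_def
    by (intro continuous_intros) (use v hh in auto)
qed

end


lemma per_comp3: "periodic N f \<Longrightarrow> periodic N g \<Longrightarrow> periodic N k \<Longrightarrow> periodic N (\<lambda>i j. F (f i j) (g i j) (k i j))"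
  unfolding periodic_def by simp

lemma per_tx: assumes "periodic N \<phi>" shows "periodic N (tx h \<phi>)"
proof -
  have "periodic N (\<lambda>i j. kappap (\<phi> i j) * ax (\<lambda>a b. (Dx h \<phi> a b)^2) i j
      - 2 * dx h (\<lambda>a b. Ax (\<lambda>c d. kappa (\<phi> c d)) a b * Dx h \<phi> a b) i j)"
    by (rule per_comp3[OF assms per_ax[OF per_comp1[OF per_Dx[OF assms]]]
          per_dx[OF per_mult[OF per_Ax[OF per_comp1[OF assms]] per_Dx[OF assms]]]])
  moreover have "tx h \<phi> = (\<lambda>i j. kappap (\<phi> i j) * ax (\<lambda>a b. (Dx h \<phi> a b)^2) i j
      - 2 * dx h (\<lambda>a b. Ax (\<lambda>c d. kappa (\<phi> c d)) a b * Dx h \<phi> a b) i j)"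
    by (intro ext) (simp add: tx_def)
  ultimately show ?thesis by simp
qed

lemma per_ty: assumes "periodic N \<phi>" shows "periodic N (ty h \<phi>)"
proof -
  have "periodic N (\<lambda>i j. kappap (\<phi> i j) * ay (\<lambda>a b. (Dy h \<phi> a b)^2) i j
      - 2 * dy h (\<lambda>a b. Ay (\<lambda>c d. kappa (\<phi> c d)) a b * Dy h \<phi> a b) i j)"
    by (rule per_comp3[OF assms per_ay[OF per_comp1[OF per_Dy[OF assms]]]
          per_dy[OF per_mult[OF per_Ay[OF per_comp1[OF assms]] per_Dy[OF assms]]]])
  moreover have "ty h \<phi> = (\<lambda>i j. kappap (\<phi> i j) * ay (\<lambda>a b. (Dy h \<phi> a b)^2) i j
      - 2 * dy h (\<lambda>a b. Ay (\<lambda>c d. kappa (\<phi> c d)) a b * Dy h \<phi> a b) i j)"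
    by (intro ext) (simp add: ty_def)
  ultimately show ?thesis by simp
qed

lemma per_Fmu:
  assumes "periodic N \<phi>" "periodic N p" "periodic N q"
  shows "periodic N (Fmu N1 N2 chi h dt A p q \<phi>)"
proof -
  have pl: "periodic N (lap h (\<lambda>a b. \<phi> a b - p a b))" by (rule per_lap[OF per_comp2[OF assms(1,2)]])
  have pH: "periodic N (\<lambda>i j. 2 * p i j - q i j)" by (rule per_comp2[OF assms(2,3)])
  have "periodic N (\<lambda>i j. Sp N1 N2 (\<phi> i j) + tx h \<phi> i j + ty h \<phi> i j)"
    by (rule per_comp3[OF assms(1) per_tx[OF assms(1)] per_ty[OF assms(1)]])
  then have "periodic N (\<lambda>i j. (Sp N1 N2 (\<phi> i j) + tx h \<phi> i j + ty h \<phi> i j) + Hp N1 N2 chi (2 * p i j - q i j)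
      - A * dt * lap h (\<lambda>a b. \<phi> a b - p a b) i j)"
    by (rule per_comp3[OF _ pH pl])
  moreover have "Fmu N1 N2 chi h dt A p q \<phi> = (\<lambda>i j. (Sp N1 N2 (\<phi> i j) + tx h \<phi> i j + ty h \<phi> i j) + Hp N1 N2 chi (2 * p i j - q i j)
      - A * dt * lap h (\<lambda>a b. \<phi> a b - p a b) i j)"
    by (intro ext) (simp add: Fmu_def)
  ultimately show ?thesis by simp
qed

lemma lap_plus_const: "lap h (\<lambda>x y. f x y + c) x y = lap h f x y"
  unfolding lap_expand by (simp add: algebra_simps)

lemma Sp_mono:
  assumes "N1 > 0" "N2 > 0" "0 < x" "x \<le> y" "y < 1 / rho N1 N2"
  shows "Sp N1 N2 x \<le> Sp N1 N2 y"
  using Sp_strict[of N1 N2 x y] assms by (cases "x = y") auto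

lemma ind_vals:
  assumes "N > 0"
  shows "ind N a b x y = (if (red N x, red N y) = (a, b) then 1 else 0)"
  unfolding ind_def by simp

context ctx
begin

lemma per_gradJ: "periodic N \<phi> \<Longrightarrow> periodic N (gradJ \<phi>)"
proof -
  assume a: "periodic N \<phi>"
  have "periodic N (\<lambda>i j. Fm \<phi> i j - Gop (fF \<phi>) i j)"
    unfolding Fm_def by (rule per_comp2[OF per_Fmu[OF a pp pq] per_Gop])
  moreover have "gradJ \<phi> = (\<lambda>i j. Fm \<phi> i j - Gop (fF \<phi>) i j)" by (intro ext) (simp add: gradJ_def)
  ultimately show ?thesis by simp
qed

lemma tsum_two_ind:
  assumes "a1 \<in> {1..int N}" "a2 \<in> {1..int N}" "b1 \<in> {1..int N}" "b2 \<in> {1..int N}"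
  shows "tsum N (\<lambda>i j. g i j * (ind N a1 a2 i j - ind N b1 b2 i j)) = g a1 a2 - g b1 b2"
  using tsum_ind[OF assms(1,2), of g] tsum_ind[OF assms(3,4), of g]
  by (simp add: right_diff_distrib tsum_diff)

lemma tsum_eta: 
  assumes "a1 \<in> {1..int N}" "a2 \<in> {1..int N}" "b1 \<in> {1..int N}" "b2 \<in> {1..int N}"
  shows "tsum N (\<lambda>i j. ind N a1 a2 i j - ind N b1 b2 i j) = 0"
  using tsum_two_ind[OF assms, of "\<lambda>i j. 1"] by simp

end


context ctx
begin

lemma existence: "\<exists>\<phi> \<mu>. sol N N1 N2 chi h dt A p q \<phi> \<mu>"
proof -
  obtain \<delta> where dp: "\<delta> > 0" and d1: "\<delta> < mm" and d2: "mm < 1 / rho N1 N2 - \<delta>"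
    and lowS: "Sp N1 N2 \<delta> < Sp N1 N2 mm - C1" and upS: "Sp N1 N2 mm + C1 < Sp N1 N2 (1 / rho N1 N2 - \<delta>)"
    using delta_exists by blast
  define K where "K = Kd \<delta>"
  have Np: "(real N)^2 > 0" using N by simp
  have tp: "tsum N p = real N * real N * mm" unfolding mm_def using N by (simp add: power2_eq_square)
  have cK: "(\<lambda>i j. mm) \<in> K" unfolding K_def Kd_def using d1 d2 per_const[of N mm]
    by (auto simp: tsum_const tp)
  obtain \<phi> where \<phi>K: "\<phi> \<in> K" and \<phi>min: "\<forall>y\<in>K. JJ \<phi> \<le> JJ y"
    using continuous_attains_inf[OF Kd_compact _ JJ_cont[OF dp]] cK unfolding K_def by blast
  have p\<phi>: "periodic N \<phi>" and b\<phi>: "\<And>i j. \<delta> \<le> \<phi> i j \<and> \<phi> i j \<le> 1 / rho N1 N2 - \<delta>"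
    and m\<phi>: "tsum N \<phi> = tsum N p"
    using \<phi>K unfolding K_def Kd_def by auto
  have r\<phi>: "0 < \<phi> i j \<and> \<phi> i j < 1 / rho N1 N2" for i j using b\<phi>[of i j] dp by auto
  obtain u1 u2 where u: "u1 \<in> {1..int N}" "u2 \<in> {1..int N}"
    and umin: "\<And>i j. i \<in> {1..int N} \<Longrightarrow> j \<in> {1..int N} \<Longrightarrow> \<phi> u1 u2 \<le> \<phi> i j"
    using finite_min_pt[OF N, of \<phi>] by blast
  obtain v1 v2 where v: "v1 \<in> {1..int N}" "v2 \<in> {1..int N}"
    and vmax: "\<And>i j. i \<in> {1..int N} \<Longrightarrow> j \<in> {1..int N} \<Longrightarrow> \<phi> i j \<le> \<phi> v1 v2"
    using finite_max_pt[OF N, of \<phi>] by blast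
  have mn: "\<phi> u1 u2 \<le> \<phi> x y" for x y
    using umin[OF red_range[OF N] red_range[OF N]] per_red[OF p\<phi>] by metis
  have mx: "\<phi> x y \<le> \<phi> v1 v2" for x y
    using vmax[OF red_range[OF N] red_range[OF N]] per_red[OF p\<phi>] by metis
  have um: "\<phi> u1 u2 \<le> mm"
  proof -
    have "real N * real N * \<phi> u1 u2 \<le> tsum N \<phi>" by (rule tsum_ge_const) (rule mn)
    then show ?thesis using m\<phi> tp N by simp
  qed
  have vm: "mm \<le> \<phi> v1 v2"
  proof -
    have "tsum N \<phi> \<le> real N * real N * \<phi> v1 v2" by (rule tsum_le_const) (rule mx)
    then show ?thesis using m\<phi> tp N by simp
  qed
  define eta where "eta a1 a2 b1 b2 = (\<lambda>i j. ind N a1 a2 i j - ind N b1 b2 i j)" for a1 a2 b1 b2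
  have peta: "periodic N (eta a1 a2 b1 b2)" for a1 a2 b1 b2
    unfolding eta_def by (rule per_comp2[OF per_ind per_ind])
  have teta: "tsum N (eta a1 a2 b1 b2) = 0"
    if "a1 \<in> {1..int N}" "a2 \<in> {1..int N}" "b1 \<in> {1..int N}" "b2 \<in> {1..int N}" for a1 a2 b1 b2
    unfolding eta_def by (rule tsum_eta[OF that])
  have deriv: "DERIV (\<lambda>s. JJ (padd \<phi> s (eta a1 a2 b1 b2))) 0 :> gradJ \<phi> a1 a2 - gradJ \<phi> b1 b2"
    if ab: "a1 \<in> {1..int N}" "a2 \<in> {1..int N}" "b1 \<in> {1..int N}" "b2 \<in> {1..int N}" for a1 a2 b1 b2
  proof -
    have "DERIV (\<lambda>s. JJ (padd \<phi> s (eta a1 a2 b1 b2))) 0 :> tsum N (\<lambda>i j. gradJ \<phi> i j * eta a1 a2 b1 b2 i j)"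
      by (rule JJ_deriv[OF p\<phi> r\<phi> m\<phi> peta teta[OF ab]])
    moreover have "tsum N (\<lambda>i j. gradJ \<phi> i j * eta a1 a2 b1 b2 i j) = gradJ \<phi> a1 a2 - gradJ \<phi> b1 b2"
      unfolding eta_def by (rule tsum_two_ind[OF ab])
    ultimately show ?thesis by simp
  qed
  have tsum_padd: "tsum N (padd \<phi> s (eta a1 a2 b1 b2)) = tsum N p"
    if "a1 \<in> {1..int N}" "a2 \<in> {1..int N}" "b1 \<in> {1..int N}" "b2 \<in> {1..int N}" for s a1 a2 b1 b2
    unfolding padd_def tsum_add tsum_cmult teta[OF that] m\<phi> by simp
  have eta_abs: "\<bar>eta a1 a2 b1 b2 i j\<bar> \<le> 1" for a1 a2 b1 b2 i j
    unfolding eta_def ind_def by auto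
  have interior: "\<delta> < \<phi> u1 u2 \<and> \<phi> v1 v2 < 1 / rho N1 N2 - \<delta>"
  proof (rule ccontr)
    assume nint: "\<not> (\<delta> < \<phi> u1 u2 \<and> \<phi> v1 v2 < 1 / rho N1 N2 - \<delta>)"
    have uv: "\<phi> u1 u2 < \<phi> v1 v2" using nint b\<phi>[of u1 u2] b\<phi>[of v1 v2] um vm d1 d2 by auto
    then have neq: "(u1, u2) \<noteq> (v1, v2)" by auto
    define d where "d = min (1 / rho N1 N2 - \<delta> - \<phi> u1 u2) (\<phi> v1 v2 - \<delta>)"
    have dpos: "d > 0" unfolding d_def using um vm d1 d2 by auto
    have inK: "padd \<phi> s (eta u1 u2 v1 v2) \<in> K" if s: "0 < s" "s < d" for s
    proof -
      have "\<delta> \<le> padd \<phi> s (eta u1 u2 v1 v2) x y \<and> padd \<phi> s (eta u1 u2 v1 v2) x y \<le> 1 / rho N1 N2 - \<delta>" for x y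
      proof -
        have ex: "\<phi> x y = \<phi> (red N x) (red N y)" using per_red[OF p\<phi>] by simp
        consider (U) "(red N x, red N y) = (u1, u2)" | (V) "(red N x, red N y) = (v1, v2)"
          | (O) "(red N x, red N y) \<noteq> (u1, u2)" "(red N x, red N y) \<noteq> (v1, v2)" by blast
        then show ?thesis
        proof cases
          case U
          then have "padd \<phi> s (eta u1 u2 v1 v2) x y = \<phi> u1 u2 + s" unfolding padd_def eta_def ind_def using neq ex by auto
          then show ?thesis using s b\<phi>[of u1 u2] unfolding d_def by auto
        next
          case V
          then have "padd \<phi> s (eta u1 u2 v1 v2) x y = \<phi> v1 v2 - s" unfolding padd_def eta_def ind_def using neq ex by auto
          then show ?thesis using s b\<phi>[of v1 v2] unfolding d_def by auto
        next
          case O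
          then have "padd \<phi> s (eta u1 u2 v1 v2) x y = \<phi> x y" unfolding padd_def eta_def ind_def by auto
          then show ?thesis using b\<phi>[of x y] by auto
        qed
      qed
      then show ?thesis unfolding K_def Kd_def
        using per_padd[OF p\<phi> peta] tsum_padd[OF u v] by blast
    qed
    have "0 \<le> gradJ \<phi> u1 u2 - gradJ \<phi> v1 v2"
      by (rule min_deriv_right[OF \<phi>min deriv[OF u v] dpos inK])
    moreover have "gradJ \<phi> u1 u2 - gradJ \<phi> v1 v2 \<le> Sp N1 N2 (\<phi> u1 u2) - Sp N1 N2 (\<phi> v1 v2) + C1"
      by (rule grad_diff[OF r\<phi> u v mn mx vm])
    moreover have "Sp N1 N2 (\<phi> u1 u2) - Sp N1 N2 (\<phi> v1 v2) + C1 < 0"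
    proof (cases "\<delta> < \<phi> u1 u2")
      case False
      then have "\<phi> u1 u2 = \<delta>" using b\<phi>[of u1 u2] by simp
      moreover have "Sp N1 N2 mm \<le> Sp N1 N2 (\<phi> v1 v2)"
        by (rule Sp_mono[OF N1 N2]) (use mm_range vm r\<phi> in auto)
      ultimately show ?thesis using lowS by simp
    next
      case True
      then have "\<phi> v1 v2 = 1 / rho N1 N2 - \<delta>" using nint b\<phi>[of v1 v2] by simp
      moreover have "Sp N1 N2 (\<phi> u1 u2) \<le> Sp N1 N2 mm"
        by (rule Sp_mono[OF N1 N2]) (use mm_range um r\<phi> in auto)
      ultimately show ?thesis using upS by simp
    qed
    ultimately show False by simp
  qed
  have EL: "gradJ \<phi> a1 a2 = gradJ \<phi> b1 b2"
    if ab: "a1 \<in> {1..int N}" "a2 \<in> {1..int N}" "b1 \<in> {1..int N}" "b2 \<in> {1..int N}" for a1 a2 b1 b2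
  proof -
    define d where "d = min (\<phi> u1 u2 - \<delta>) (1 / rho N1 N2 - \<delta> - \<phi> v1 v2)"
    have dpos: "d > 0" unfolding d_def using interior by auto
    have inK: "padd \<phi> s (eta a1 a2 b1 b2) \<in> K" if s: "\<bar>s\<bar> < d" for s
    proof -
      have "\<delta> \<le> padd \<phi> s (eta a1 a2 b1 b2) x y \<and> padd \<phi> s (eta a1 a2 b1 b2) x y \<le> 1 / rho N1 N2 - \<delta>" for x y
      proof -
        have "\<bar>s * eta a1 a2 b1 b2 x y\<bar> \<le> \<bar>s\<bar>" using eta_abs[of a1 a2 b1 b2 x y]
          by (simp add: abs_mult mult_left_le)
        then show ?thesis unfolding padd_def using mn[of x y] mx[of x y] s unfolding d_def by (auto simp: abs_le_iff)
      qed
      then show ?thesis unfolding K_def Kd_def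
        using per_padd[OF p\<phi> peta] tsum_padd[OF ab] by blast
    qed
    have "gradJ \<phi> a1 a2 - gradJ \<phi> b1 b2 = 0"
      by (rule min_deriv[OF \<phi>min deriv[OF ab] dpos inK])
    then show ?thesis by simp
  qed
  have one: "1 \<in> {1..int N}" using N by simp
  define C where "C = gradJ \<phi> 1 1"
  have gC: "gradJ \<phi> x y = C" for x y
  proof -
    have "gradJ \<phi> x y = gradJ \<phi> (red N x) (red N y)" using per_red[OF per_gradJ[OF p\<phi>]] by simp
    also have "\<dots> = C" unfolding C_def by (rule EL) (use red_range[OF N] one in auto)
    finally show ?thesis .
  qed
  define \<mu> where "\<mu> = Fm \<phi>"
  have \<mu>eq: "\<mu> = (\<lambda>x y. Gop (fF \<phi>) x y + C)"
    unfolding \<mu>_def using gC unfolding gradJ_def by (intro ext) (simp add: algebra_simps)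
  have lap\<mu>: "lap h \<mu> x y = (3 * \<phi> x y - 4 * p x y + q x y) / (2 * dt)" for x y
  proof -
    have "lap h \<mu> x y = lap h (Gop (fF \<phi>)) x y" unfolding \<mu>eq by (rule lap_plus_const)
    also have "\<dots> = fF \<phi> x y - tsum N (fF \<phi>) / (real N)^2" by (rule lap_Gop[OF per_fF[OF p\<phi>]])
    also have "\<dots> = fF \<phi> x y" using tsum_fF[OF m\<phi>] by simp
    finally show ?thesis unfolding fF_def .
  qed
  have "sol N N1 N2 chi h dt A p q \<phi> \<mu>"
    unfolding sol_def scheme_iff
    using p\<phi> per_Fmu[OF p\<phi> pp pq] r\<phi> lap\<mu> unfolding \<mu>_def Fm_def by auto
  then show ?thesis by blast
qed

end


lemma gmean_tsum: "gmean N L \<nu> = ((L / real N)^2 / L^2) * tsum N \<nu>"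
  unfolding gmean_def tsum_def ..

theorem theorem4p1:
  fixes N1 N2 \<chi> L dt A :: real and N :: nat and p q :: gridfun
  assumes "N1 > 0" and "N2 > 0" and "\<chi> > 0" and "L > 0" and "N > 0"
    and "dt > 0" and "A > 0"
    and "periodic N p" and "periodic N q"
    and "\<forall>i j. 0 < p i j \<and> p i j < 1 / rho N1 N2"
    and "\<forall>i j. 0 < q i j \<and> q i j < 1 / rho N1 N2"
    and "gmean N L p = gmean N L q"
  shows "(\<exists>!(\<phi>, \<mu>). periodic N \<phi> \<and> periodic N \<mu>
            \<and> (\<forall>i j. 0 < \<phi> i j \<and> \<phi> i j < 1 / rho N1 N2)
            \<and> scheme N1 N2 \<chi> (L / real N) dt A p q \<phi> \<mu>)
         \<and> (\<forall>\<phi> \<mu>. periodic N \<phi> \<and> periodic N \<mu>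
            \<and> (\<forall>i j. 0 < \<phi> i j \<and> \<phi> i j < 1 / rho N1 N2)
            \<and> scheme N1 N2 \<chi> (L / real N) dt A p q \<phi> \<mu>
            \<longrightarrow> gmean N L \<phi> = gmean N L p)"
proof -
  define h where "h = L / real N"
  have hp: "h > 0" unfolding h_def using assms(4,5) by simp
  have cnz: "(L / real N)^2 / L^2 \<noteq> 0" using assms(4,5) by simp
  have mean: "tsum N p = tsum N q" using assms(12) cnz unfolding gmean_tsum by simp
  interpret c: ctx N1 N2 \<chi> h dt A N p q
    by unfold_locales (use assms hp mean in auto)
  obtain \<phi>0 \<mu>0 where s0: "sol N N1 N2 \<chi> h dt A p q \<phi>0 \<mu>0" using c.existence by blast
  have uq: "\<And>\<phi> \<mu>. sol N N1 N2 \<chi> h dt A p q \<phi> \<mu> \<Longrightarrow> \<phi> = \<phi>0 \<and> \<mu> = \<mu>0"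
    using uniqueness[OF assms(1,2,6,7) hp assms(5,8,9) _ s0] by blast
  have part1: "\<exists>!(\<phi>, \<mu>). sol N N1 N2 \<chi> h dt A p q \<phi> \<mu>"
  proof (rule ex1I[of _ "(\<phi>0, \<mu>0)"])
    show "case (\<phi>0, \<mu>0) of (\<phi>, \<mu>) \<Rightarrow> sol N N1 N2 \<chi> h dt A p q \<phi> \<mu>" using s0 by simp
    fix z assume "case z of (\<phi>, \<mu>) \<Rightarrow> sol N N1 N2 \<chi> h dt A p q \<phi> \<mu>"
    then show "z = (\<phi>0, \<mu>0)" using uq by (cases z) auto
  qed
  have part2: "gmean N L \<phi> = gmean N L p" if sc: "periodic N \<phi>" "periodic N \<mu>"
      "scheme N1 N2 \<chi> h dt A p q \<phi> \<mu>" for \<phi> \<mu>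
  proof -
    have e1: "(3 * \<phi> i j - 4 * p i j + q i j) / (2 * dt) = lap h \<mu> i j" for i j
      using sc(3) unfolding scheme_def by simp
    have "tsum N (\<lambda>i j. (3 * \<phi> i j - 4 * p i j + q i j) / (2 * dt)) = 0"
      unfolding e1 by (rule tsum_lap[OF sc(2)])
    then have "(3 * tsum N \<phi> - 4 * tsum N p + tsum N q) / (2 * dt) = 0"
      by (simp add: tsum_divide tsum_add tsum_diff tsum_cmult)
    then have "tsum N \<phi> = tsum N p" using assms(6) mean by simp
    then show ?thesis unfolding gmean_tsum by simp
  qed
  show ?thesis
    using part1 part2 unfolding sol_def h_def by blast
qed


end
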